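(* Let $U$ be a connected coordinate domain with coordinates $(x^1,x^2)$ carrying a connection $\nabla$ whose Christoffel symbols satisfy $\Gamma_{ij}{}^k=\Gamma_{ij}{}^k(x^1)$, $\Gamma_{11}{}^1=0$, $\Gamma_{11}{}^2=0$ (so that $\partial_{x^2}$ is an affine Killing vector field). Let $\mathfrak{K}_{\mathbb{C}}$ denote the complex affine Killing vector fields on $U$ (complex-coefficient vector fields satisfying the affine Killing equations), $\mathfrak{K}$ the real ones, and for $\alpha\in\mathbb{C}$ set $\mathfrak{K}_\alpha:=\{X=e^{\alpha x^2}v(x^1)\partial_{x^2}:X\in\mathfrak{K}_{\mathbb{C}}\}$. (1) If there exists $X\in\mathfrak{K}_\alpha$ which is not a constant multiple of $\partial_{x^2}$, then $$\Gamma_{11}{}^1=0,\ \Gamma_{11}{}^2=0,\ \Gamma_{12}{}^1=0,\ \Gamma_{21}{}^1=0,\ \Gamma_{22}{}^1=0,\ \Gamma_{22}{}^2=-\alpha.\qquad(\ast)$$ (2) Suppose the Christoffel symbols satisfy $(\ast)$ for a given $\alpha$. Then: (a) if $u(x^1,x^2)\partial_{x^1}+w(x^1,x^2)\partial_{x^2}\in\mathfrak{K}_{\mathbb{C}}$, then (i) $\alpha\,\partial_{x^2}u+\partial_{x^2}^2u=0$ and (ii) $(\Gamma_{12}{}^2(x^1)+\Gamma_{21}{}^2(x^1))\partial_{x^1}w+\partial_{x^1}^2w=0$; (b) $\mathfrak{K}_\alpha=\{e^{\alpha x^2}v(x^1)\partial_{x^2}:(\Gamma_{12}{}^2(x^1)+\Gamma_{21}{}^2(x^1))v'(x^1)+v''(x^1)=0\}$;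 (c) if moreover $\alpha=0$ and $u(x^1,x^2)\partial_{x^1}+\{\sum_nw_n(x^1)(x^2)^n\}\partial_{x^2}\in\mathfrak{K}_{\mathbb{C}}$, then $w_n(x^1)\partial_{x^2}\in\mathfrak{K}_0$ for all $n$; furthermore $x^2\partial_{x^2}\in\mathfrak{K}$.
   Context: $\nabla_{\partial_{x^i}}\partial_{x^j}=\Gamma_{ij}{}^k\partial_{x^k}$ (torsion allowed). A vector field $X=a^k\partial_{x^k}$ (real or complex coefficients) is an affine Killing vector field iff for all $1\le i,j,k\le2$: $$0=\frac{\partial^2a^k}{\partial x^i\partial x^j}+\sum_\ell\Big\{a^\ell\frac{\partial\Gamma_{ij}{}^k}{\partial x^\ell}-\Gamma_{ij}{}^\ell\frac{\partial a^k}{\partial x^\ell}+\Gamma_{i\ell}{}^k\frac{\partial a^\ell}{\partial x^j}+\Gamma_{\ell j}{}^k\frac{\partial a^\ell}{\partial x^i}\Big\}.$$ *)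

theory Defs
  imports "HOL-Analysis.Analysis"
begin

text \<open>Points of the coordinate domain are pairs (x1, x2). Coefficient functions of
vector fields are complex valued. Coordinate indices are 1 and 2.\<close>

type_synonym cfun = "real \<times> real \<Rightarrow> complex"

text \<open>Vector field X = X 1 * d/dx1 + X 2 * d/dx2 (only indices 1, 2 matter).\<close>
type_synonym vfield = "nat \<Rightarrow> cfun"

definition pd_exists :: "nat \<Rightarrow> cfun \<Rightarrow> real \<times> real \<Rightarrow> bool" where
  "pd_exists i f p \<longleftrightarrow>
     (if i = 1 then (\<lambda>s. f (s, snd p)) differentiable (at (fst p))
      else (\<lambda>t. f (fst p, t)) differentiable (at (snd p)))"

definition pd :: "nat \<Rightarrow> cfun \<Rightarrow> cfun" where
  "pd i f p =
     (if i = 1 then vector_derivative (\<lambda>s. f (s, snd p)) (at (fst p))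
      else vector_derivative (\<lambda>t. f (fst p, t)) (at (snd p)))"

fun pds :: "nat list \<Rightarrow> cfun \<Rightarrow> cfun" where
  "pds [] f = f"
| "pds (i # is) f = pd i (pds is f)"

definition smooth_on :: "(real \<times> real) set \<Rightarrow> cfun \<Rightarrow> bool" where
  "smooth_on U f \<longleftrightarrow>
     (\<forall>is. set is \<subseteq> {1, 2} \<longrightarrow>
        continuous_on U (pds is f) \<and> (\<forall>i\<in>{1, 2}. \<forall>p\<in>U. pd_exists i (pds is f) p))"

definition Gc :: "(nat \<Rightarrow> nat \<Rightarrow> nat \<Rightarrow> real \<Rightarrow> real) \<Rightarrow> nat \<Rightarrow> nat \<Rightarrow> nat \<Rightarrow> cfun" where
  "Gc \<Gamma> i j k = (\<lambda>p. complex_of_real (\<Gamma> i j k (fst p)))"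

definition KC :: "(nat \<Rightarrow> nat \<Rightarrow> nat \<Rightarrow> real \<Rightarrow> real) \<Rightarrow> (real \<times> real) set \<Rightarrow> vfield set" where
  "KC \<Gamma> U = {X. smooth_on U (X 1) \<and> smooth_on U (X 2) \<and>
     (\<forall>p\<in>U. \<forall>i\<in>{1, 2}. \<forall>j\<in>{1, 2}. \<forall>k\<in>{1, 2}.
        pd i (pd j (X k)) p
        + (\<Sum>l\<in>{1, 2}. X l p * pd l (Gc \<Gamma> i j k) p
                        - Gc \<Gamma> i j l p * pd l (X k) p
                        + Gc \<Gamma> i l k p * pd j (X l) p
                        + Gc \<Gamma> l j k p * pd i (X l) p) = 0)}"

definition KR :: "(nat \<Rightarrow> nat \<Rightarrow> nat \<Rightarrow> real \<Rightarrow> real) \<Rightarrow> (real \<times> real) set \<Rightarrow> vfield set" where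
  "KR \<Gamma> U = {X \<in> KC \<Gamma> U. \<forall>k\<in>{1, 2}. \<forall>p\<in>U. X k p \<in> \<real>}"

definition Kalpha :: "(nat \<Rightarrow> nat \<Rightarrow> nat \<Rightarrow> real \<Rightarrow> real) \<Rightarrow> (real \<times> real) set \<Rightarrow> complex \<Rightarrow> vfield set" where
  "Kalpha \<Gamma> U \<alpha> = {X \<in> KC \<Gamma> U. \<exists>v :: real \<Rightarrow> complex.
      \<forall>p\<in>U. X 1 p = 0 \<and> X 2 p = exp (\<alpha> * complex_of_real (snd p)) * v (fst p)}"

definition vf :: "cfun \<Rightarrow> cfun \<Rightarrow> vfield" where
  "vf u w = (\<lambda>k. if k = 1 then u else w)"

definition star :: "(nat \<Rightarrow> nat \<Rightarrow> nat \<Rightarrow> real \<Rightarrow> real) \<Rightarrow> (real \<times> real) set \<Rightarrow> complex \<Rightarrow> bool" where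
  "star \<Gamma> U \<alpha> \<longleftrightarrow> (\<forall>p\<in>U.
      \<Gamma> 1 1 1 (fst p) = 0 \<and> \<Gamma> 1 1 2 (fst p) = 0 \<and> \<Gamma> 1 2 1 (fst p) = 0 \<and>
      \<Gamma> 2 1 1 (fst p) = 0 \<and> \<Gamma> 2 2 1 (fst p) = 0 \<and>
      complex_of_real (\<Gamma> 2 2 2 (fst p)) = - \<alpha>)"

end

theory Submission
  imports Defs "HOL-Complex_Analysis.Complex_Analysis"
begin


definition D1 :: "(real \<Rightarrow> complex) \<Rightarrow> real \<Rightarrow> complex" where
  "D1 f = (\<lambda>s. vector_derivative f (at s))"

fun Dn :: "nat \<Rightarrow> (real \<Rightarrow> complex) \<Rightarrow> real \<Rightarrow> complex" where
  "Dn 0 f = f"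
| "Dn (Suc n) f = D1 (Dn n f)"

definition smooth1 :: "real set \<Rightarrow> (real \<Rightarrow> complex) \<Rightarrow> bool" where
  "smooth1 S f \<longleftrightarrow> (\<forall>n. \<forall>x\<in>S. Dn n f differentiable (at x))"

lemma hvd_local:
  fixes f g :: "real \<Rightarrow> complex"
  assumes "open S" "x \<in> S" "\<forall>s\<in>S. f s = g s"
  shows "(f has_vector_derivative f') (at x) \<longleftrightarrow> (g has_vector_derivative f') (at x)"
  using assms has_vector_derivative_transform_within_open[of f f' x S g]
    has_vector_derivative_transform_within_open[of g f' x S f] by auto

lemma vd_local:
  fixes f g :: "real \<Rightarrow> complex"
  assumes "open S" "x \<in> S" "\<forall>s\<in>S. f s = g s"
  shows "vector_derivative f (at x) = vector_derivative g (at x)"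
  unfolding vector_derivative_def using hvd_local[OF assms] by simp

lemma diff_local:
  fixes f g :: "real \<Rightarrow> complex"
  assumes "open S" "x \<in> S" "\<forall>s\<in>S. f s = g s"
  shows "f differentiable (at x) \<longleftrightarrow> g differentiable (at x)"
  using hvd_local[OF assms] vector_derivative_works differentiableI_vector by metis

lemma Dn_local:
  fixes f g :: "real \<Rightarrow> complex"
  assumes "open S" "\<forall>s\<in>S. f s = g s"
  shows "\<forall>s\<in>S. Dn n f s = Dn n g s"
proof (induction n)
  case 0 then show ?case using assms by simp
next
  case (Suc n) then show ?case using assms by (auto simp: D1_def intro!: vd_local)
qed

lemma smooth1_local:
  fixes f g :: "real \<Rightarrow> complex"
  assumes "open S" "\<forall>s\<in>S. f s = g s" "smooth1 S f"
  shows "smooth1 S g"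
  unfolding smooth1_def
proof (intro allI ballI)
  fix n x assume "x \<in> S"
  have "\<forall>s\<in>S. Dn n f s = Dn n g s" using Dn_local assms by blast
  then show "Dn n g differentiable at x"
    using diff_local[OF assms(1) \<open>x\<in>S\<close>] assms(3) \<open>x\<in>S\<close> unfolding smooth1_def by blast
qed

lemma vd_at: "(f::real\<Rightarrow>complex) differentiable (at x) \<Longrightarrow> (f has_vector_derivative vector_derivative f (at x)) (at x)"
  using vector_derivative_works by blast

lemma lin_comb:
  fixes f g :: "real \<Rightarrow> complex"
  assumes "open S" "smooth1 S f" "smooth1 S g"
  shows "\<forall>s\<in>S. Dn n (\<lambda>s. a * f s + b * g s) s = a * Dn n f s + b * Dn n g s"
proof (induction n)
  case 0 then show ?case by simp
next
  case (Suc n)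
  show ?case
  proof
    fix s assume s: "s \<in> S"
    have "Dn (Suc n) (\<lambda>s. a * f s + b * g s) s = vector_derivative (\<lambda>s. a * Dn n f s + b * Dn n g s) (at s)"
      using vd_local[OF assms(1) s Suc] by (simp add: D1_def)
    also have "\<dots> = a * Dn (Suc n) f s + b * Dn (Suc n) g s"
      apply (rule vector_derivative_at)
      using assms(2,3) s unfolding smooth1_def D1_def Dn.simps
      by (intro has_vector_derivative_add has_vector_derivative_mult_right vd_at) auto
    finally show "Dn (Suc n) (\<lambda>s. a * f s + b * g s) s = a * Dn (Suc n) f s + b * Dn (Suc n) g s" .
  qed
qed

lemma lin_comb_smooth:
  fixes f g :: "real \<Rightarrow> complex"
  assumes "open S" "smooth1 S f" "smooth1 S g"
  shows "smooth1 S (\<lambda>s. a * f s + b * g s)"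
  unfolding smooth1_def
proof (intro allI ballI)
  fix n x assume x: "x \<in> S"
  have d1: "Dn n f differentiable at x" and d2: "Dn n g differentiable at x"
    using assms x unfolding smooth1_def by auto
  have "(\<lambda>s. a * Dn n f s + b * Dn n g s) differentiable at x"
    by (rule differentiableI_vector, rule has_vector_derivative_add, rule has_vector_derivative_mult_right, rule vd_at, rule d1, rule has_vector_derivative_mult_right, rule vd_at, rule d2)
  then show "Dn n (\<lambda>s. a * f s + b * g s) differentiable at x"
    using diff_local[OF assms(1) x lin_comb[OF assms, of n a b]] by simp
qed

lemma Dn_const: "Dn (Suc n) (\<lambda>_. c) = (\<lambda>_. 0)"
  by (induction n) (auto simp: D1_def)

lemma smooth1_const: "smooth1 S (\<lambda>_. c)"
  unfolding smooth1_def
proof (intro allI ballI)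
  fix n x
  show "Dn n (\<lambda>_. c) differentiable at x"
  proof (cases n)
    case 0 then show ?thesis by simp
  next
    case (Suc m) then show ?thesis by (simp only: Dn_const) simp
  qed
qed

lemma smooth1_ofreal: "smooth1 S (\<lambda>t. complex_of_real t)"
  and Dn_ofreal: "Dn 1 (\<lambda>t. complex_of_real t) = (\<lambda>_. 1)" "Dn (Suc (Suc n)) (\<lambda>t. complex_of_real t) = (\<lambda>_. 0)"
proof -
  have d: "Dn 1 (\<lambda>t. complex_of_real t) = (\<lambda>_. 1)"
    by (auto simp: D1_def intro!: ext vector_derivative_at derivative_eq_intros)
  then show "Dn 1 (\<lambda>t. complex_of_real t) = (\<lambda>_. 1)" .
  have dd: "Dn (Suc (Suc n)) (\<lambda>t. complex_of_real t) = (\<lambda>_. 0)" for n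
  proof (induction n)
    case 0 then show ?case using d by (simp add: D1_def)
  next
    case (Suc n) then show ?case by (simp add: D1_def)
  qed
  then show "Dn (Suc (Suc n)) (\<lambda>t. complex_of_real t) = (\<lambda>_. 0)" .
  show "smooth1 S (\<lambda>t. complex_of_real t)"
    unfolding smooth1_def
  proof (intro allI ballI)
    fix n x
    show "Dn n (\<lambda>t. complex_of_real t) differentiable at x"
    proof (cases n)
      case 0 then show ?thesis
        using differentiableI_vector[OF has_vector_derivative_of_real[OF DERIV_ident]] by simp
    next
      case (Suc m) then show ?thesis
        using d dd by (cases m) auto
    qed
  qed
qed

lemma Dn_exp: "Dn n (\<lambda>t. exp (\<alpha> * complex_of_real t)) = (\<lambda>t. \<alpha> ^ n * exp (\<alpha> * complex_of_real t))"
proof (induction n)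
  case 0 then show ?case by simp
next
  case (Suc n)
  show ?case
    unfolding Dn.simps Suc D1_def
  proof
    fix s
    have "((\<lambda>t. exp (\<alpha> * complex_of_real t)) has_vector_derivative \<alpha> * exp (\<alpha> * complex_of_real s)) (at s)"
    proof -
      have "((\<lambda>t. exp (\<alpha> * complex_of_real t)) has_vector_derivative exp (\<alpha> * complex_of_real s) * \<alpha>) (at s)"
        by (rule has_vector_derivative_real_field) (auto intro!: derivative_eq_intros)
      then show ?thesis by (simp add: mult.commute)
    qed
    then have "((\<lambda>t. \<alpha> ^ n * exp (\<alpha> * complex_of_real t)) has_vector_derivative \<alpha> ^ n * (\<alpha> * exp (\<alpha> * complex_of_real s))) (at s)"
      by (rule has_vector_derivative_mult_right)
    then show "vector_derivative (\<lambda>t. \<alpha> ^ n * exp (\<alpha> * complex_of_real t)) (at s) = \<alpha> ^ Suc n * exp (\<alpha> * complex_of_real s)"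
      by (simp add: vector_derivative_at mult.assoc)
  qed
qed

lemma smooth1_exp: "smooth1 S (\<lambda>t. exp (\<alpha> * complex_of_real t))"
  unfolding smooth1_def Dn_exp
proof (intro allI ballI)
  fix n and x :: real
  have e: "((\<lambda>t. exp (\<alpha> * complex_of_real t)) has_vector_derivative exp (\<alpha> * complex_of_real x) * \<alpha>) (at x)"
    by (rule has_vector_derivative_real_field) (auto intro!: derivative_eq_intros)
  show "(\<lambda>t. \<alpha> ^ n * exp (\<alpha> * complex_of_real t)) differentiable at x"
    by (rule differentiableI_vector[OF has_vector_derivative_mult_right[OF e]])
qed



lemma pd1: "pd 1 f p = vector_derivative (\<lambda>s. f (s, snd p)) (at (fst p))"
  and pd2: "pd 2 f p = vector_derivative (\<lambda>t. f (fst p, t)) (at (snd p))"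
  and pde1: "pd_exists 1 f p \<longleftrightarrow> ((\<lambda>s. f (s, snd p)) differentiable (at (fst p)))"
  and pde2: "pd_exists 2 f p \<longleftrightarrow> ((\<lambda>t. f (fst p, t)) differentiable (at (snd p)))"
  by (simp_all add: pd_def pd_exists_def)

lemma pd1': "pd (Suc 0) f p = vector_derivative (\<lambda>s. f (s, snd p)) (at (fst p))"
  and pde1': "pd_exists (Suc 0) f p \<longleftrightarrow> ((\<lambda>s. f (s, snd p)) differentiable (at (fst p)))"
  by (simp_all add: pd_def pd_exists_def)

lemma pd_other: "i \<noteq> 1 \<Longrightarrow> pd i f p = pd 2 f p \<and> pd_exists i f p = pd_exists 2 f p"
  by (simp add: pd_def pd_exists_def)

lemma open_slice1: "open (U::(real\<times>real) set) \<Longrightarrow> open {s. (s, y) \<in> U}"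
proof -
  assume "open U"
  have "open ((\<lambda>s. (s, y)) -` U)"
    by (rule continuous_open_vimage[OF \<open>open U\<close>]) (auto intro!: continuous_intros)
  then show ?thesis by (simp add: vimage_def)
qed

lemma open_slice2: "open (U::(real\<times>real) set) \<Longrightarrow> open {t. (x, t) \<in> U}"
proof -
  assume "open U"
  have "open ((\<lambda>t. (x, t)) -` U)"
    by (rule continuous_open_vimage[OF \<open>open U\<close>]) (auto intro!: continuous_intros)
  then show ?thesis by (simp add: vimage_def)
qed

lemma pd_local:
  assumes "open U" "p \<in> U" "\<forall>q\<in>U. f q = g q"
  shows "pd i f p = pd i g p \<and> (pd_exists i f p \<longleftrightarrow> pd_exists i g p)"
proof (cases "i = 1")
  case True
  let ?S = "{s. (s, snd p) \<in> U}"
  have S: "open ?S" "fst p \<in> ?S" "\<forall>s\<in>?S. (\<lambda>s. f (s, snd p)) s = (\<lambda>s. g (s, snd p)) s"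
    using open_slice1[OF assms(1)] assms by auto
  show ?thesis using True vd_local[OF S] diff_local[OF S] by (simp add: pd1 pde1 pd1' pde1')
next
  case False
  let ?S = "{t. (fst p, t) \<in> U}"
  have S: "open ?S" "snd p \<in> ?S" "\<forall>s\<in>?S. (\<lambda>t. f (fst p, t)) s = (\<lambda>t. g (fst p, t)) s"
    using open_slice2[OF assms(1)] assms by auto
  show ?thesis using False vd_local[OF S] diff_local[OF S] pd_other[OF False] by (simp add: pd2 pde2)
qed

lemma pds_local:
  assumes "open U" "\<forall>q\<in>U. f q = g q"
  shows "\<forall>q\<in>U. pds is f q = pds is g q"
proof (induction "is")
  case Nil then show ?case using assms by simp
next
  case (Cons i "is") then show ?case using pd_local[OF assms(1)] by simp
qed

lemma smooth_on_cong:
  assumes "open U" "\<forall>q\<in>U. f q = g q" "smooth_on U f"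
  shows "smooth_on U g"
  unfolding smooth_on_def
proof (intro allI impI conjI)
  fix "is" :: "nat list" assume "set is \<subseteq> {1, 2}"
  then have c: "continuous_on U (pds is f)" and e: "\<forall>i\<in>{1,2}. \<forall>p\<in>U. pd_exists i (pds is f) p"
    using assms(3) unfolding smooth_on_def by auto
  have eq: "\<forall>q\<in>U. pds is f q = pds is g q" using pds_local[OF assms(1,2)] .
  show "continuous_on U (pds is g)" using continuous_on_eq[OF c] eq by auto
  show "\<forall>i\<in>{1, 2}. \<forall>p\<in>U. pd_exists i (pds is g) p"
    using e pd_local[OF assms(1) _ eq] by blast
qed

lemma pds_rep1: "pds (replicate n 1) f (s, y) = Dn n (\<lambda>s. f (s, y)) s"
proof (induction n arbitrary: s)
  case 0 then show ?case by simp
next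
  case (Suc n)
  have "(\<lambda>s. pds (replicate n 1) f (s, y)) = Dn n (\<lambda>s. f (s, y))" using Suc by (intro ext) simp
  then show ?case by (simp add: pd1 pd1' D1_def)
qed

lemma pds_rep2: "pds (replicate n 2) f (x, t) = Dn n (\<lambda>t. f (x, t)) t"
proof (induction n arbitrary: t)
  case 0 then show ?case by simp
next
  case (Suc n)
  have "(\<lambda>t. pds (replicate n 2) f (x, t)) = Dn n (\<lambda>t. f (x, t))" using Suc by (intro ext) simp
  then show ?case by (simp add: pd2 D1_def)
qed

lemma smooth_slice1:
  assumes "smooth_on U f" "\<forall>s\<in>S. (s, y) \<in> U"
  shows "smooth1 S (\<lambda>s. f (s, y))"
  unfolding smooth1_def
proof (intro allI ballI)
  fix n x assume x: "x \<in> S"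
  have "set (replicate n (1::nat)) \<subseteq> {1,2}" by auto
  then have "pd_exists 1 (pds (replicate n 1) f) (x, y)" using assms x unfolding smooth_on_def by auto
  then have "(\<lambda>s. pds (replicate n 1) f (s, y)) differentiable at x" by (simp add: pde1 pde1')
  moreover have "(\<lambda>s. pds (replicate n 1) f (s, y)) = Dn n (\<lambda>s. f (s, y))" by (intro ext) (rule pds_rep1)
  ultimately show "Dn n (\<lambda>s. f (s, y)) differentiable at x" by simp
qed

lemma smooth_slice2:
  assumes "smooth_on U f" "\<forall>t\<in>T. (x, t) \<in> U"
  shows "smooth1 T (\<lambda>t. f (x, t))"
  unfolding smooth1_def
proof (intro allI ballI)
  fix n y assume y: "y \<in> T"
  have "set (replicate n (2::nat)) \<subseteq> {1,2}" by auto
  then have "pd_exists 2 (pds (replicate n 2) f) (x, y)" using assms y unfolding smooth_on_def by auto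
  then have "(\<lambda>t. pds (replicate n 2) f (x, t)) differentiable at y" by (simp add: pde2)
  moreover have "(\<lambda>t. pds (replicate n 2) f (x, t)) = Dn n (\<lambda>t. f (x, t))" by (intro ext) (rule pds_rep2)
  ultimately show "Dn n (\<lambda>t. f (x, t)) differentiable at y" by simp
qed

definition cnt1 :: "nat list \<Rightarrow> nat" where "cnt1 is = length (filter (\<lambda>i. i = 1) is)"
definition cnt2 :: "nat list \<Rightarrow> nat" where "cnt2 is = length (filter (\<lambda>i. i \<noteq> 1) is)"

lemma prod_pd1:
  assumes a: "smooth1 UNIV a" and b: "smooth1 S b" and x: "x \<in> S"
  shows "pd i (\<lambda>q. Dn m a (snd q) * Dn n b (fst q)) (x, y) =
           (if i = 1 then Dn m a y * Dn (Suc n) b x else Dn (Suc m) a y * Dn n b x)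
         \<and> pd_exists i (\<lambda>q. Dn m a (snd q) * Dn n b (fst q)) (x, y)"
proof -
  have db: "Dn n b differentiable at x" using b x unfolding smooth1_def by auto
  have da: "Dn m a differentiable at y" using a unfolding smooth1_def by auto
  have h1: "((\<lambda>s. Dn m a y * Dn n b s) has_vector_derivative Dn m a y * Dn (Suc n) b x) (at x)"
    by (simp add: D1_def) (rule has_vector_derivative_mult_right[OF vd_at[OF db]])
  have h2: "((\<lambda>t. Dn m a t * Dn n b x) has_vector_derivative Dn (Suc m) a y * Dn n b x) (at y)"
    by (simp add: D1_def) (rule has_vector_derivative_mult_left[OF vd_at[OF da]])
  show ?thesis
  proof (cases "i = 1")
    case True then show ?thesis
      using vector_derivative_at[OF h1] differentiableI_vector[OF h1] by (simp add: pd1 pde1 pd1' pde1')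
  next
    case False then show ?thesis
      using vector_derivative_at[OF h2] differentiableI_vector[OF h2] pd_other[OF False]
      by (simp add: pd2 pde2)
  qed
qed

lemma prod_pds:
  assumes S: "open S" and a: "smooth1 UNIV a" and b: "smooth1 S b"
  shows "\<forall>p. fst p \<in> S \<longrightarrow> pds is (\<lambda>q. a (snd q) * b (fst q)) p = Dn (cnt2 is) a (snd p) * Dn (cnt1 is) b (fst p)"
proof (induction "is")
  case Nil then show ?case by (simp add: cnt1_def cnt2_def)
next
  case (Cons i "is")
  show ?case
  proof (intro allI impI)
    fix p :: "real \<times> real" assume p: "fst p \<in> S"
    have o: "open (S \<times> UNIV)" using S by (simp add: open_Times)
    have pin: "p \<in> S \<times> UNIV" using p by (cases p) auto
    have eq: "\<forall>q\<in>S \<times> UNIV. pds is (\<lambda>q. a (snd q) * b (fst q)) q = (\<lambda>q. Dn (cnt2 is) a (snd q) * Dn (cnt1 is) b (fst q)) q"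
      using Cons by auto
    have "pds (i # is) (\<lambda>q. a (snd q) * b (fst q)) p = pd i (\<lambda>q. Dn (cnt2 is) a (snd q) * Dn (cnt1 is) b (fst q)) p"
      using pd_local[OF o pin eq] by simp
    also have "\<dots> = (if i = 1 then Dn (cnt2 is) a (snd p) * Dn (Suc (cnt1 is)) b (fst p) else Dn (Suc (cnt2 is)) a (snd p) * Dn (cnt1 is) b (fst p))"
      using prod_pd1[OF a b p, of i "cnt2 is" "cnt1 is" "snd p"] by simp
    also have "\<dots> = Dn (cnt2 (i # is)) a (snd p) * Dn (cnt1 (i # is)) b (fst p)"
      by (simp add: cnt1_def cnt2_def)
    finally show "pds (i # is) (\<lambda>q. a (snd q) * b (fst q)) p = Dn (cnt2 (i # is)) a (snd p) * Dn (cnt1 (i # is)) b (fst p)" .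
  qed
qed

lemma prod_smooth:
  assumes S: "open S" and a: "smooth1 UNIV a" and b: "smooth1 S b" and U: "open U" "fst ` U \<subseteq> S"
  shows "smooth_on U (\<lambda>q. a (snd q) * b (fst q))"
  unfolding smooth_on_def
proof (intro allI impI conjI)
  fix "is" :: "nat list"
  have o: "open (S \<times> UNIV)" using S by (simp add: open_Times)
  have eq: "\<forall>q\<in>S \<times> UNIV. pds is (\<lambda>q. a (snd q) * b (fst q)) q = (\<lambda>q. Dn (cnt2 is) a (snd q) * Dn (cnt1 is) b (fst q)) q"
    using prod_pds[OF S a b] by auto
  have ca: "continuous_on UNIV (Dn (cnt2 is) a)"
    using a unfolding smooth1_def by (intro continuous_at_imp_continuous_on) (auto intro: differentiable_imp_continuous_within)
  have cb: "continuous_on S (Dn (cnt1 is) b)"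
    using b unfolding smooth1_def
    by (intro continuous_at_imp_continuous_on) (auto intro: differentiable_imp_continuous_within)
  have cnt1': "continuous_on U (\<lambda>q. Dn (cnt2 is) a (snd q))"
    by (rule continuous_on_compose2[OF ca continuous_on_snd[OF continuous_on_id]]) simp
  have cnt2': "continuous_on U (\<lambda>q. Dn (cnt1 is) b (fst q))"
    by (rule continuous_on_compose2[OF cb continuous_on_fst[OF continuous_on_id]]) (use U(2) in simp)
  have c: "continuous_on U (\<lambda>q. Dn (cnt2 is) a (snd q) * Dn (cnt1 is) b (fst q))"
    by (rule continuous_on_mult[OF cnt1' cnt2'])
  have eqU: "\<forall>q\<in>U. (\<lambda>q. Dn (cnt2 is) a (snd q) * Dn (cnt1 is) b (fst q)) q = pds is (\<lambda>q. a (snd q) * b (fst q)) q"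
  proof
    fix q assume "q \<in> U"
    then have "fst q \<in> S" using U(2) by (simp add: image_subset_iff)
    then have "q \<in> S \<times> UNIV" by (simp add: mem_Times_iff)
    then show "(\<lambda>q. Dn (cnt2 is) a (snd q) * Dn (cnt1 is) b (fst q)) q = pds is (\<lambda>q. a (snd q) * b (fst q)) q"
      using bspec[OF eq] by simp
  qed
  show "continuous_on U (pds is (\<lambda>q. a (snd q) * b (fst q)))"
  proof (rule continuous_on_eq[OF c])
    fix q assume "q \<in> U"
    then show "Dn (cnt2 is) a (snd q) * Dn (cnt1 is) b (fst q) = pds is (\<lambda>q. a (snd q) * b (fst q)) q"
      using eqU \<open>q \<in> U\<close> by simp
  qed
  show "\<forall>i\<in>{1, 2}. \<forall>p\<in>U. pd_exists i (pds is (\<lambda>q. a (snd q) * b (fst q))) p"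
  proof (intro ballI)
    fix i p assume p: "p \<in> U"
    then have ps: "fst p \<in> S" using U by auto
    have pin: "p \<in> S \<times> UNIV" using ps by (cases p) auto
    have "pd_exists i (\<lambda>q. Dn (cnt2 is) a (snd q) * Dn (cnt1 is) b (fst q)) (fst p, snd p)"
      using prod_pd1[OF a b ps] by blast
    then show "pd_exists i (pds is (\<lambda>q. a (snd q) * b (fst q))) p"
      using pd_local[OF o pin eq] by simp
  qed
qed

lemma Gc_pd2: "pd 2 (Gc \<Gamma> i j k) p = 0"
  by (simp add: pd2 Gc_def)

lemma Gc_pd1_const:
  assumes "open P" "fst p \<in> P" "\<forall>s\<in>P. complex_of_real (\<Gamma> i j k s) = c"
  shows "pd 1 (Gc \<Gamma> i j k) p = 0"
proof -
  have "pd 1 (Gc \<Gamma> i j k) p = vector_derivative (\<lambda>s. complex_of_real (\<Gamma> i j k s)) (at (fst p))"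
    by (simp add: pd1 pd1' Gc_def)
  also have "\<dots> = vector_derivative (\<lambda>s. c) (at (fst p))"
    by (rule vd_local[OF assms])
  finally show ?thesis by simp
qed



definition Keq :: "(nat \<Rightarrow> nat \<Rightarrow> nat \<Rightarrow> real \<Rightarrow> real) \<Rightarrow> vfield \<Rightarrow> real \<times> real \<Rightarrow> nat \<Rightarrow> nat \<Rightarrow> nat \<Rightarrow> complex" where
  "Keq \<Gamma> X p i j k = pd i (pd j (X k)) p
        + (\<Sum>l\<in>{1, 2}. X l p * pd l (Gc \<Gamma> i j k) p
                        - Gc \<Gamma> i j l p * pd l (X k) p
                        + Gc \<Gamma> i l k p * pd j (X l) p
                        + Gc \<Gamma> l j k p * pd i (X l) p)"

lemma KC_iff: "X \<in> KC \<Gamma> U \<longleftrightarrow> smooth_on U (X 1) \<and> smooth_on U (X 2) \<and>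
   (\<forall>p\<in>U. \<forall>i\<in>{1,2}. \<forall>j\<in>{1,2}. \<forall>k\<in>{1,2}. Keq \<Gamma> X p i j k = 0)"
  by (simp add: KC_def Keq_def)

lemma Keq_exp: "Keq \<Gamma> X p i j k = pd i (pd j (X k)) p
      + (X 1 p * pd 1 (Gc \<Gamma> i j k) p - Gc \<Gamma> i j 1 p * pd 1 (X k) p
         + Gc \<Gamma> i 1 k p * pd j (X 1) p + Gc \<Gamma> 1 j k p * pd i (X 1) p)
      + (X 2 p * pd 2 (Gc \<Gamma> i j k) p - Gc \<Gamma> i j 2 p * pd 2 (X k) p
         + Gc \<Gamma> i 2 k p * pd j (X 2) p + Gc \<Gamma> 2 j k p * pd i (X 2) p)"
  by (simp add: Keq_def)

lemma pd_zero: "pd i (\<lambda>_. 0) = (\<lambda>_. 0)"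
  by (intro ext) (simp add: pd_def)

lemma pds_zero: "pds is (\<lambda>_. 0) = (\<lambda>_. 0)"
  by (induction "is") (simp_all add: pd_zero)

lemma vert_pds:
  assumes U: "open U" and S: "open S" "fst ` U \<subseteq> S" and a: "smooth1 UNIV a" and v: "smooth1 S v"
    and X1: "\<forall>q\<in>U. X 1 q = 0" and X2: "\<forall>q\<in>U. X 2 q = a (snd q) * v (fst q)" and p: "p \<in> U"
  shows "pds is (X 1) p = 0" "pds is (X 2) p = Dn (cnt2 is) a (snd p) * Dn (cnt1 is) v (fst p)"
proof -
  show "pds is (X 1) p = 0"
    using bspec[OF pds_local[OF U X1] p] by (simp add: pds_zero)
  have "fst p \<in> S" using S p by blast
  then show "pds is (X 2) p = Dn (cnt2 is) a (snd p) * Dn (cnt1 is) v (fst p)"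
    using bspec[OF pds_local[OF U X2] p] prod_pds[OF S(1) a v] by simp
qed

lemma vert_eqs:
  assumes U: "open U" and S: "open S" "fst ` U \<subseteq> S" and a: "smooth1 UNIV a" and v: "smooth1 S v"
    and X1: "\<forall>q\<in>U. X 1 q = 0" and X2: "\<forall>q\<in>U. X 2 q = a (snd q) * v (fst q)" and p: "p \<in> U"
  defines "A0 \<equiv> a (snd p)" and "A1 \<equiv> Dn 1 a (snd p)" and "A2 \<equiv> Dn 2 a (snd p)"
    and "V0 \<equiv> v (fst p)" and "V1 \<equiv> Dn 1 v (fst p)" and "V2 \<equiv> Dn 2 v (fst p)"
  shows "Keq \<Gamma> X p 1 1 1 = (Gc \<Gamma> 1 2 1 p + Gc \<Gamma> 2 1 1 p) * (A0 * V1)"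
    and "Keq \<Gamma> X p 1 2 1 = Gc \<Gamma> 1 2 1 p * (A1 * V0) + Gc \<Gamma> 2 2 1 p * (A0 * V1)"
    and "Keq \<Gamma> X p 2 1 1 = Gc \<Gamma> 2 2 1 p * (A0 * V1) + Gc \<Gamma> 2 1 1 p * (A1 * V0)"
    and "Keq \<Gamma> X p 2 2 1 = 2 * Gc \<Gamma> 2 2 1 p * (A1 * V0)"
    and "Keq \<Gamma> X p 1 1 2 = A0 * V2 - Gc \<Gamma> 1 1 1 p * (A0 * V1) - Gc \<Gamma> 1 1 2 p * (A1 * V0)
                            + (Gc \<Gamma> 1 2 2 p + Gc \<Gamma> 2 1 2 p) * (A0 * V1)"
    and "Keq \<Gamma> X p 1 2 2 = A1 * V1 - Gc \<Gamma> 1 2 1 p * (A0 * V1) + Gc \<Gamma> 2 2 2 p * (A0 * V1)"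
    and "Keq \<Gamma> X p 2 1 2 = A1 * V1 - Gc \<Gamma> 2 1 1 p * (A0 * V1) + Gc \<Gamma> 2 2 2 p * (A0 * V1)"
    and "Keq \<Gamma> X p 2 2 2 = A2 * V0 - Gc \<Gamma> 2 2 1 p * (A0 * V1) + Gc \<Gamma> 2 2 2 p * (A1 * V0)"
proof -
  note P = vert_pds[OF U S a v X1 X2 p]
  have z1: "pd j (X 1) p = 0" for j using P(1)[of "[j]"] by simp
  have z2: "pd i (pd j (X 1)) p = 0" for i j using P(1)[of "[i, j]"] by simp
  have x0: "X 1 p = 0" "X 2 p = A0 * V0" using X1 X2 p by (auto simp: A0_def V0_def)
  have d1: "pd 1 (X 2) p = A0 * V1" using P(2)[of "[1]"] by (simp add: cnt1_def cnt2_def A0_def V1_def)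
  have d2: "pd 2 (X 2) p = A1 * V0" using P(2)[of "[2]"] by (simp add: cnt1_def cnt2_def A1_def V0_def)
  have d11: "pd 1 (pd 1 (X 2)) p = A0 * V2" using P(2)[of "[1,1]"]
    by (simp add: cnt1_def cnt2_def A0_def V2_def numeral_2_eq_2)
  have d12: "pd 1 (pd 2 (X 2)) p = A1 * V1" using P(2)[of "[1,2]"] by (simp add: cnt1_def cnt2_def A1_def V1_def)
  have d21: "pd 2 (pd 1 (X 2)) p = A1 * V1" using P(2)[of "[2,1]"] by (simp add: cnt1_def cnt2_def A1_def V1_def)
  have d22: "pd 2 (pd 2 (X 2)) p = A2 * V0" using P(2)[of "[2,2]"]
    by (simp add: cnt1_def cnt2_def A2_def V0_def numeral_2_eq_2)
  note R = Keq_exp z1 z2 x0 d1 d2 d11 d12 d21 d22 Gc_pd2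
  show "Keq \<Gamma> X p 1 1 1 = (Gc \<Gamma> 1 2 1 p + Gc \<Gamma> 2 1 1 p) * (A0 * V1)"
    by (simp only: R) (simp add: algebra_simps)
  show "Keq \<Gamma> X p 1 2 1 = Gc \<Gamma> 1 2 1 p * (A1 * V0) + Gc \<Gamma> 2 2 1 p * (A0 * V1)"
    by (simp only: R) (simp add: algebra_simps)
  show "Keq \<Gamma> X p 2 1 1 = Gc \<Gamma> 2 2 1 p * (A0 * V1) + Gc \<Gamma> 2 1 1 p * (A1 * V0)"
    by (simp only: R) (simp add: algebra_simps)
  show "Keq \<Gamma> X p 2 2 1 = 2 * Gc \<Gamma> 2 2 1 p * (A1 * V0)"
    by (simp only: R) (simp add: algebra_simps)
  show "Keq \<Gamma> X p 1 1 2 = A0 * V2 - Gc \<Gamma> 1 1 1 p * (A0 * V1) - Gc \<Gamma> 1 1 2 p * (A1 * V0)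
                            + (Gc \<Gamma> 1 2 2 p + Gc \<Gamma> 2 1 2 p) * (A0 * V1)"
    by (simp only: R) (simp add: algebra_simps)
  show "Keq \<Gamma> X p 1 2 2 = A1 * V1 - Gc \<Gamma> 1 2 1 p * (A0 * V1) + Gc \<Gamma> 2 2 2 p * (A0 * V1)"
    by (simp only: R) (simp add: algebra_simps)
  show "Keq \<Gamma> X p 2 1 2 = A1 * V1 - Gc \<Gamma> 2 1 1 p * (A0 * V1) + Gc \<Gamma> 2 2 2 p * (A0 * V1)"
    by (simp only: R) (simp add: algebra_simps)
  show "Keq \<Gamma> X p 2 2 2 = A2 * V0 - Gc \<Gamma> 2 2 1 p * (A0 * V1) + Gc \<Gamma> 2 2 2 p * (A1 * V0)"
    by (simp only: R) (simp add: algebra_simps)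
qed

lemma star_at:
  assumes "star \<Gamma> U \<alpha>" "s \<in> fst ` U"
  shows "\<Gamma> 1 1 1 s = 0" "\<Gamma> 1 1 2 s = 0" "\<Gamma> 1 2 1 s = 0" "\<Gamma> 2 1 1 s = 0" "\<Gamma> 2 2 1 s = 0"
    "complex_of_real (\<Gamma> 2 2 2 s) = - \<alpha>"
  using assms unfolding star_def by auto

lemma gen_eqs:
  assumes U: "open U" and st: "star \<Gamma> U \<alpha>" and p: "p \<in> U"
  shows "Keq \<Gamma> (vf u w) p 2 2 1 = pd 2 (pd 2 u) p + \<alpha> * pd 2 u p"
    and "Keq \<Gamma> (vf u w) p 1 1 2 = pd 1 (pd 1 w) p + (Gc \<Gamma> 1 2 2 p + Gc \<Gamma> 2 1 2 p) * pd 1 w p"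
    and "Keq \<Gamma> (vf u w) p 2 2 2 = pd 2 (pd 2 w) p + (Gc \<Gamma> 1 2 2 p + Gc \<Gamma> 2 1 2 p) * pd 2 u p - \<alpha> * pd 2 w p"
proof -
  let ?P = "fst ` U"
  have oP: "open ?P" using U by (rule open_image_fst)
  have xP: "fst p \<in> ?P" using p by blast
  have c221: "\<forall>s\<in>?P. complex_of_real (\<Gamma> 2 2 1 s) = 0"
  proof
    fix s assume "s \<in> ?P" then show "complex_of_real (\<Gamma> 2 2 1 s) = 0" using star_at(5)[OF st, of s] by simp
  qed
  have c112: "\<forall>s\<in>?P. complex_of_real (\<Gamma> 1 1 2 s) = 0"
  proof
    fix s assume "s \<in> ?P" then show "complex_of_real (\<Gamma> 1 1 2 s) = 0" using star_at(2)[OF st, of s] by simp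
  qed
  have c222: "\<forall>s\<in>?P. complex_of_real (\<Gamma> 2 2 2 s) = - \<alpha>"
  proof
    fix s assume "s \<in> ?P" then show "complex_of_real (\<Gamma> 2 2 2 s) = - \<alpha>" using star_at(6)[OF st, of s] by simp
  qed
  have dg221: "pd 1 (Gc \<Gamma> 2 2 1) p = 0" by (rule Gc_pd1_const[where \<Gamma>=\<Gamma> and i=2 and j=2 and k=1, OF oP xP c221])
  have dg112: "pd 1 (Gc \<Gamma> 1 1 2) p = 0" by (rule Gc_pd1_const[where \<Gamma>=\<Gamma> and i=1 and j=1 and k=2, OF oP xP c112])
  have dg222: "pd 1 (Gc \<Gamma> 2 2 2) p = 0" by (rule Gc_pd1_const[where \<Gamma>=\<Gamma> and i=2 and j=2 and k=2, OF oP xP c222])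
  have G: "Gc \<Gamma> 1 1 1 p = 0" "Gc \<Gamma> 1 1 2 p = 0" "Gc \<Gamma> 1 2 1 p = 0" "Gc \<Gamma> 2 1 1 p = 0"
     "Gc \<Gamma> 2 2 1 p = 0" "Gc \<Gamma> 2 2 2 p = - \<alpha>"
    using star_at[OF st xP] by (simp_all add: Gc_def)
  have v: "vf u w 1 = u" "vf u w 2 = w" by (simp_all add: vf_def)
  note R = Keq_exp v G dg221 dg112 dg222 Gc_pd2
  show "Keq \<Gamma> (vf u w) p 2 2 1 = pd 2 (pd 2 u) p + \<alpha> * pd 2 u p"
    by (simp only: R) (simp add: algebra_simps)
  show "Keq \<Gamma> (vf u w) p 1 1 2 = pd 1 (pd 1 w) p + (Gc \<Gamma> 1 2 2 p + Gc \<Gamma> 2 1 2 p) * pd 1 w p"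
    by (simp only: R) (simp add: algebra_simps)
  show "Keq \<Gamma> (vf u w) p 2 2 2 = pd 2 (pd 2 w) p + (Gc \<Gamma> 1 2 2 p + Gc \<Gamma> 2 1 2 p) * pd 2 u p - \<alpha> * pd 2 w p"
    by (simp only: R) (simp add: algebra_simps)
qed



lemma hvd_within0:
  fixes f :: "real \<Rightarrow> complex"
  assumes "(f has_vector_derivative 0) (at x within S)"
  shows "(f has_derivative (\<lambda>h. 0)) (at x within S)"
  using assms by (simp add: has_vector_derivative_def)

lemma zero_deriv_const:
  fixes f :: "real \<Rightarrow> complex"
  assumes P: "connected P" and d: "\<forall>x\<in>P. (f has_vector_derivative 0) (at x)"
    and x0: "x0 \<in> P" and x1: "x1 \<in> P"
  shows "f x1 = f x0"
proof -
  let ?I = "{min x0 x1 .. max x0 x1}"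
  have I: "?I \<subseteq> P" using connected_contains_Icc[OF P] x0 x1 by (simp add: min_def max_def)
  have "\<exists>c. \<forall>x\<in>?I. f x = c"
  proof (rule has_derivative_zero_constant)
    show "convex ?I" by (rule convex_real_interval)
    fix x assume "x \<in> ?I"
    then have "x \<in> P" using I by (rule subsetD[rotated])
    then have "(f has_vector_derivative 0) (at x)" by (rule bspec[OF d])
    then show "(f has_derivative (\<lambda>h. 0)) (at x within ?I)"
      by (rule hvd_within0[OF has_vector_derivative_at_within])
  qed
  then obtain c where "\<forall>x\<in>?I. f x = c" by blast
  moreover have "x0 \<in> ?I" "x1 \<in> ?I" by auto
  ultimately show ?thesis by simp
qed

lemma ode_unique:
  fixes z g :: "real \<Rightarrow> complex"
  assumes P: "connected P" and cont: "continuous_on P g"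
    and d: "\<forall>x\<in>P. (z has_vector_derivative (- g x * z x)) (at x)"
    and x0: "x0 \<in> P" and x1: "x1 \<in> P" and z0: "z x0 = 0"
  shows "z x1 = 0"
proof -
  define a where "a = min x0 x1"
  define b where "b = max x0 x1"
  let ?I = "{a..b}"
  have I: "?I \<subseteq> P" using connected_contains_Icc[OF P] x0 x1 by (simp add: a_def b_def min_def max_def)
  have cI: "continuous_on ?I g" using continuous_on_subset[OF cont I] .
  define G where "G u = integral {a..u} g" for u
  define h where "h u = z u * exp (G u)" for u
  have "\<exists>c. \<forall>x\<in>?I. h x = c"
  proof (rule has_derivative_zero_constant)
    show "convex ?I" by (rule convex_real_interval)
    fix u assume u: "u \<in> ?I"
    have Gd: "(G has_vector_derivative g u) (at u within ?I)"
      unfolding G_def by (rule integral_has_vector_derivative[OF cI u])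
    have ed: "(exp has_field_derivative exp (G u)) (at (G u) within G ` ?I)"
      by (rule has_field_derivative_at_within) (rule DERIV_exp)
    have Ed: "((\<lambda>u. exp (G u)) has_vector_derivative (g u * exp (G u))) (at u within ?I)"
      using field_vector_diff_chain_within[OF Gd ed] by (simp add: o_def)
    have uP: "u \<in> P" using I u by (rule subsetD)
    have zd: "(z has_vector_derivative (- g u * z u)) (at u within ?I)"
      by (rule has_vector_derivative_at_within[OF bspec[OF d uP]])
    have "(h has_vector_derivative (z u * (g u * exp (G u)) + (- g u * z u) * exp (G u))) (at u within ?I)"
      unfolding h_def by (rule has_vector_derivative_mult[OF zd Ed])
    moreover have "z u * (g u * exp (G u)) + (- g u * z u) * exp (G u) = 0" by (simp add: algebra_simps)
    ultimately show "(h has_derivative (\<lambda>h. 0)) (at u within ?I)"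
      by (intro hvd_within0) simp
  qed
  then obtain c where c: "\<forall>x\<in>?I. h x = c" by blast
  have "x0 \<in> ?I" "x1 \<in> ?I" by (auto simp: a_def b_def)
  then have "h x1 = h x0" using c by simp
  then have "z x1 * exp (G x1) = 0" using z0 by (simp add: h_def)
  then show ?thesis by simp
qed

lemma extract_v:
  assumes U: "open U" and F: "smooth_on U F" and eq: "\<forall>q\<in>U. F q = a (snd q) * v (fst q)"
    and a: "\<forall>t. a t \<noteq> 0"
  shows "smooth1 (fst ` U) v"
  unfolding smooth1_def
proof (intro allI ballI)
  fix n x assume "x \<in> fst ` U"
  then obtain q where q: "q \<in> U" "x = fst q" by (rule imageE) simp
  define y0 where "y0 = snd q"
  have q0: "(x, y0) \<in> U" using q by (simp add: y0_def)
  let ?S = "{s. (s, y0) \<in> U}"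
  have oS: "open ?S" by (rule open_slice1[OF U])
  have xS: "x \<in> ?S" using q0 by simp
  have sm: "smooth1 ?S (\<lambda>s. F (s, y0))" by (rule smooth_slice1[OF F]) simp
  have sm2: "smooth1 ?S (\<lambda>s. inverse (a y0) * F (s, y0) + 0 * F (s, y0))"
    by (rule lin_comb_smooth[OF oS sm sm])
  have "\<forall>s\<in>?S. inverse (a y0) * F (s, y0) + 0 * F (s, y0) = v s"
  proof
    fix s assume "s \<in> ?S"
    then have "(s, y0) \<in> U" by simp
    then have "F (s, y0) = a y0 * v s" using eq by simp
    then show "inverse (a y0) * F (s, y0) + 0 * F (s, y0) = v s" using spec[OF a, of y0] by (simp add: field_simps)
  qed
  then have "smooth1 ?S v" by (rule smooth1_local[OF oS _ sm2])
  then show "Dn n v differentiable at x" using xS unfolding smooth1_def by blast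
qed



lemma ball8: "(\<forall>i\<in>{1::nat,2}. \<forall>j\<in>{1::nat,2}. \<forall>k\<in>{1::nat,2}. Q i j k) \<longleftrightarrow>
  (Q 1 1 1 \<and> Q 1 2 1 \<and> Q 2 1 1 \<and> Q 2 2 1 \<and> Q 1 1 2 \<and> Q 1 2 2 \<and> Q 2 1 2 \<and> Q 2 2 2)"
  by auto

lemma vexp_eqs:
  assumes U: "open U" and v: "smooth1 (fst ` U) v"
    and X1: "\<forall>q\<in>U. X 1 q = 0" and X2: "\<forall>q\<in>U. X 2 q = exp (\<alpha> * complex_of_real (snd q)) * v (fst q)"
    and p: "p \<in> U"
  defines "V0 \<equiv> v (fst p)" and "V1 \<equiv> Dn 1 v (fst p)" and "V2 \<equiv> Dn 2 v (fst p)"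
  shows "(\<forall>i\<in>{1,2}. \<forall>j\<in>{1,2}. \<forall>k\<in>{1,2}. Keq \<Gamma> X p i j k = 0) \<longleftrightarrow>
    ((Gc \<Gamma> 1 2 1 p + Gc \<Gamma> 2 1 1 p) * V1 = 0 \<and>
     Gc \<Gamma> 1 2 1 p * (\<alpha> * V0) + Gc \<Gamma> 2 2 1 p * V1 = 0 \<and>
     Gc \<Gamma> 2 2 1 p * V1 + Gc \<Gamma> 2 1 1 p * (\<alpha> * V0) = 0 \<and>
     Gc \<Gamma> 2 2 1 p * (\<alpha> * V0) = 0 \<and>
     V2 - Gc \<Gamma> 1 1 1 p * V1 - Gc \<Gamma> 1 1 2 p * (\<alpha> * V0) + (Gc \<Gamma> 1 2 2 p + Gc \<Gamma> 2 1 2 p) * V1 = 0 \<and>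
     \<alpha> * V1 - Gc \<Gamma> 1 2 1 p * V1 + Gc \<Gamma> 2 2 2 p * V1 = 0 \<and>
     \<alpha> * V1 - Gc \<Gamma> 2 1 1 p * V1 + Gc \<Gamma> 2 2 2 p * V1 = 0 \<and>
     \<alpha>^2 * V0 - Gc \<Gamma> 2 2 1 p * V1 + Gc \<Gamma> 2 2 2 p * (\<alpha> * V0) = 0)"
proof -
  define e where "e = exp (\<alpha> * complex_of_real (snd p))"
  have e0: "e \<noteq> 0" by (simp add: e_def)
  have oP: "open (fst ` U)" using U by (rule open_image_fst)
  note VE = vert_eqs[OF U oP subset_refl smooth1_exp v X1 X2 p, of \<Gamma>]
  have A1: "Dn 1 (\<lambda>t. exp (\<alpha> * complex_of_real t)) (snd p) = \<alpha> * e"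
    by (simp only: Dn_exp) (simp add: e_def)
  have A2: "Dn 2 (\<lambda>t. exp (\<alpha> * complex_of_real t)) (snd p) = \<alpha>^2 * e"
    by (simp only: Dn_exp) (simp add: e_def)
  have A0: "(\<lambda>t. exp (\<alpha> * complex_of_real t)) (snd p) = e" by (simp add: e_def)
  note VE' = VE[unfolded A0 A1 A2, folded V0_def V1_def V2_def]
  have z: "\<And>w. e * w = 0 \<longleftrightarrow> w = 0" using e0 by simp
  have K1: "Keq \<Gamma> X p 1 1 1 = e * ((Gc \<Gamma> 1 2 1 p + Gc \<Gamma> 2 1 1 p) * V1)"
    using VE'(1) by (simp add: algebra_simps)
  have K2: "Keq \<Gamma> X p 1 2 1 = e * (Gc \<Gamma> 1 2 1 p * (\<alpha> * V0) + Gc \<Gamma> 2 2 1 p * V1)"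
    using VE'(2) by (simp add: algebra_simps)
  have K3: "Keq \<Gamma> X p 2 1 1 = e * (Gc \<Gamma> 2 2 1 p * V1 + Gc \<Gamma> 2 1 1 p * (\<alpha> * V0))"
    using VE'(3) by (simp add: algebra_simps)
  have K4: "Keq \<Gamma> X p 2 2 1 = e * (2 * (Gc \<Gamma> 2 2 1 p * (\<alpha> * V0)))"
    using VE'(4) by (simp add: algebra_simps)
  have K5: "Keq \<Gamma> X p 1 1 2 = e * (V2 - Gc \<Gamma> 1 1 1 p * V1 - Gc \<Gamma> 1 1 2 p * (\<alpha> * V0) + (Gc \<Gamma> 1 2 2 p + Gc \<Gamma> 2 1 2 p) * V1)"
    using VE'(5) by (simp add: algebra_simps)
  have K6: "Keq \<Gamma> X p 1 2 2 = e * (\<alpha> * V1 - Gc \<Gamma> 1 2 1 p * V1 + Gc \<Gamma> 2 2 2 p * V1)"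
    using VE'(6) by (simp add: algebra_simps)
  have K7: "Keq \<Gamma> X p 2 1 2 = e * (\<alpha> * V1 - Gc \<Gamma> 2 1 1 p * V1 + Gc \<Gamma> 2 2 2 p * V1)"
    using VE'(7) by (simp add: algebra_simps)
  have K8: "Keq \<Gamma> X p 2 2 2 = e * (\<alpha>^2 * V0 - Gc \<Gamma> 2 2 1 p * V1 + Gc \<Gamma> 2 2 2 p * (\<alpha> * V0))"
    using VE'(8) by (simp add: algebra_simps power2_eq_square)
  show ?thesis
    unfolding ball8[where Q = "\<lambda>i j k. Keq \<Gamma> X p i j k = 0"] K1 K2 K3 K4 K5 K6 K7 K8 z
    by simp
qed



lemma star_point_A:
  fixes G121 G211 G221 G222 \<alpha> c :: complex
  assumes "\<alpha> \<noteq> 0" "c \<noteq> 0"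
    and eq2: "G121 * (\<alpha> * c) + G221 * 0 = 0" and eq3: "G221 * 0 + G211 * (\<alpha> * c) = 0"
    and eq4: "G221 * (\<alpha> * c) = 0" and eq8: "\<alpha>^2 * c - G221 * 0 + G222 * (\<alpha> * c) = 0"
  shows "G121 = 0 \<and> G211 = 0 \<and> G221 = 0 \<and> G222 = - \<alpha>"
proof -
  have "(\<alpha> + G222) * (\<alpha> * c) = 0" using eq8 by (simp add: algebra_simps power2_eq_square)
  then have "\<alpha> + G222 = 0" using assms(1,2) by simp
  then show ?thesis using eq2 eq3 eq4 assms(1,2) by (simp add: eq_neg_iff_add_eq_0 add.commute)
qed

lemma star_point_B:
  fixes G121 G211 G221 G222 \<alpha> Va Vb :: complex
  assumes "Vb \<noteq> 0"
    and eq1: "(G121 + G211) * Vb = 0" and eq2: "G121 * (\<alpha> * Va) + G221 * Vb = 0"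
    and eq6: "\<alpha> * Vb - G121 * Vb + G222 * Vb = 0" and eq7: "\<alpha> * Vb - G211 * Vb + G222 * Vb = 0"
  shows "G121 = 0 \<and> G211 = 0 \<and> G221 = 0 \<and> G222 = - \<alpha>"
proof -
  have e1: "G121 + G211 = 0" using eq1 assms(1) by simp
  have "(\<alpha> - G121 + G222) * Vb = 0" using eq6 by (simp add: algebra_simps)
  then have e6: "\<alpha> - G121 + G222 = 0" using assms(1) by simp
  have "(\<alpha> - G211 + G222) * Vb = 0" using eq7 by (simp add: algebra_simps)
  then have e7: "\<alpha> - G211 + G222 = 0" using assms(1) by simp
  have g: "G121 = G211" using e6 e7 by (simp add: algebra_simps)
  then have g0: "G121 = 0" using e1 by simp
  then have "G211 = 0" using g by simp
  moreover have "G222 = - \<alpha>" using e6 g0 by (simp add: eq_neg_iff_add_eq_0 add.commute)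
  moreover have "G221 = 0" using eq2 g0 assms(1) by simp
  ultimately show ?thesis using g0 by simp
qed

lemma Kalpha_data:
  assumes U: "open U" and X: "X \<in> Kalpha \<Gamma> U \<alpha>"
  obtains v where "smooth1 (fst ` U) v" "\<forall>q\<in>U. X 1 q = 0" "\<forall>q\<in>U. X 2 q = exp (\<alpha> * complex_of_real (snd q)) * v (fst q)"
    "\<forall>p\<in>U. \<forall>i\<in>{1,2}. \<forall>j\<in>{1,2}. \<forall>k\<in>{1,2}. Keq \<Gamma> X p i j k = 0"
proof -
  from X obtain v where KC: "X \<in> KC \<Gamma> U" and f: "\<forall>p\<in>U. X 1 p = 0 \<and> X 2 p = exp (\<alpha> * complex_of_real (snd p)) * v (fst p)"
    unfolding Kalpha_def by blast
  have sm2: "smooth_on U (X 2)" using KC by (simp add: KC_iff)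
  have X1: "\<forall>q\<in>U. X 1 q = 0" using f by simp
  have X2: "\<forall>q\<in>U. X 2 q = exp (\<alpha> * complex_of_real (snd q)) * v (fst q)" using f by simp
  have v: "smooth1 (fst ` U) v"
    by (rule extract_v[OF U sm2, of "\<lambda>t. exp (\<alpha> * complex_of_real t)"]) (use X2 in simp_all)
  show ?thesis using that[OF v X1 X2] KC by (simp add: KC_iff)
qed

lemma part2b_back:
  assumes U: "open U" and st: "star \<Gamma> U \<alpha>" and vs: "smooth_on U (\<lambda>p. v (fst p))"
    and form: "\<forall>p\<in>U. X 1 p = 0 \<and> X 2 p = exp (\<alpha> * complex_of_real (snd p)) * v (fst p)"
    and ode: "\<forall>p\<in>U. complex_of_real (\<Gamma> 1 2 2 (fst p) + \<Gamma> 2 1 2 (fst p)) * vector_derivative v (at (fst p))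
                   + vector_derivative (\<lambda>s. vector_derivative v (at s)) (at (fst p)) = 0"
  shows "X \<in> Kalpha \<Gamma> U \<alpha>"
proof -
  have oP: "open (fst ` U)" using U by (rule open_image_fst)
  have v1: "smooth1 (fst ` U) v"
    by (rule extract_v[OF U vs, of "\<lambda>_. 1"]) simp_all
  have X1: "\<forall>q\<in>U. X 1 q = 0" using form by simp
  have X2: "\<forall>q\<in>U. X 2 q = exp (\<alpha> * complex_of_real (snd q)) * v (fst q)" using form by simp
  have s0: "smooth_on U (\<lambda>q. (\<lambda>_. 0) (snd q) * (\<lambda>_. 0) (fst q))"
    by (rule prod_smooth[OF oP smooth1_const smooth1_const U subset_refl])
  have sX1: "smooth_on U (X 1)"
    by (rule smooth_on_cong[OF U _ s0]) (use X1 in simp)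
  have s2: "smooth_on U (\<lambda>q. (\<lambda>t. exp (\<alpha> * complex_of_real t)) (snd q) * v (fst q))"
    by (rule prod_smooth[OF oP smooth1_exp v1 U subset_refl])
  have sX2: "smooth_on U (X 2)"
    by (rule smooth_on_cong[OF U _ s2]) (use X2 in simp)
  have eqs: "\<forall>p\<in>U. \<forall>i\<in>{1,2}. \<forall>j\<in>{1,2}. \<forall>k\<in>{1,2}. Keq \<Gamma> X p i j k = 0"
  proof
    fix p assume p: "p \<in> U"
    have xP: "fst p \<in> fst ` U" using p by simp
    have G: "Gc \<Gamma> 1 1 1 p = 0" "Gc \<Gamma> 1 1 2 p = 0" "Gc \<Gamma> 1 2 1 p = 0" "Gc \<Gamma> 2 1 1 p = 0"
      "Gc \<Gamma> 2 2 1 p = 0" "Gc \<Gamma> 2 2 2 p = - \<alpha>"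
      using star_at[OF st xP] by (simp_all add: Gc_def)
    have o: "complex_of_real (\<Gamma> 1 2 2 (fst p) + \<Gamma> 2 1 2 (fst p)) * vector_derivative v (at (fst p))
                   + vector_derivative (\<lambda>s. vector_derivative v (at s)) (at (fst p)) = 0"
      using ode p by simp
    have o': "Dn 2 v (fst p) + (Gc \<Gamma> 1 2 2 p + Gc \<Gamma> 2 1 2 p) * Dn 1 v (fst p) = 0"
      using o by (simp add: Gc_def D1_def numeral_2_eq_2 algebra_simps)
    show "\<forall>i\<in>{1,2}. \<forall>j\<in>{1,2}. \<forall>k\<in>{1,2}. Keq \<Gamma> X p i j k = 0"
      unfolding vexp_eqs[OF U v1 X1 X2 p] G
      using o' by (simp add: algebra_simps power2_eq_square)
  qed
  have "X \<in> KC \<Gamma> U" using sX1 sX2 eqs by (simp add: KC_iff)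
  then show ?thesis unfolding Kalpha_def using form by blast
qed

lemma part2b_fwd:
  assumes U: "open U" and h111: "\<forall>p\<in>U. \<Gamma> 1 1 1 (fst p) = 0" and h112: "\<forall>p\<in>U. \<Gamma> 1 1 2 (fst p) = 0"
    and X: "X \<in> Kalpha \<Gamma> U \<alpha>"
  shows "\<exists>v :: real \<Rightarrow> complex. smooth_on U (\<lambda>p. v (fst p)) \<and>
                (\<forall>p\<in>U. X 1 p = 0 \<and> X 2 p = exp (\<alpha> * complex_of_real (snd p)) * v (fst p)) \<and>
                (\<forall>p\<in>U. complex_of_real (\<Gamma> 1 2 2 (fst p) + \<Gamma> 2 1 2 (fst p))
                           * vector_derivative v (at (fst p))
                         + vector_derivative (\<lambda>s. vector_derivative v (at s)) (at (fst p)) = 0)"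
proof -
  obtain v where v1: "smooth1 (fst ` U) v" and X1: "\<forall>q\<in>U. X 1 q = 0"
    and X2: "\<forall>q\<in>U. X 2 q = exp (\<alpha> * complex_of_real (snd q)) * v (fst q)"
    and eqs: "\<forall>p\<in>U. \<forall>i\<in>{1,2}. \<forall>j\<in>{1,2}. \<forall>k\<in>{1,2}. Keq \<Gamma> X p i j k = 0"
    using Kalpha_data[OF U X] by blast
  have oP: "open (fst ` U)" using U by (rule open_image_fst)
  have s1: "smooth_on U (\<lambda>q. (\<lambda>_. 1) (snd q) * v (fst q))"
    by (rule prod_smooth[OF oP smooth1_const v1 U subset_refl])
  then have s: "smooth_on U (\<lambda>p. v (fst p))" by simp
  have ode: "\<forall>p\<in>U. complex_of_real (\<Gamma> 1 2 2 (fst p) + \<Gamma> 2 1 2 (fst p)) * vector_derivative v (at (fst p))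
                   + vector_derivative (\<lambda>s. vector_derivative v (at s)) (at (fst p)) = 0"
  proof
    fix p assume p: "p \<in> U"
    have e: "\<forall>i\<in>{1,2}. \<forall>j\<in>{1,2}. \<forall>k\<in>{1,2}. Keq \<Gamma> X p i j k = 0" using eqs p by simp
    have G: "Gc \<Gamma> 1 1 1 p = 0" "Gc \<Gamma> 1 1 2 p = 0" using h111 h112 p by (simp_all add: Gc_def)
    have "Dn 2 v (fst p) - Gc \<Gamma> 1 1 1 p * Dn 1 v (fst p) - Gc \<Gamma> 1 1 2 p * (\<alpha> * v (fst p))
            + (Gc \<Gamma> 1 2 2 p + Gc \<Gamma> 2 1 2 p) * Dn 1 v (fst p) = 0"
      using e unfolding vexp_eqs[OF U v1 X1 X2 p] by simp
    then show "complex_of_real (\<Gamma> 1 2 2 (fst p) + \<Gamma> 2 1 2 (fst p)) * vector_derivative v (at (fst p))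
                   + vector_derivative (\<lambda>s. vector_derivative v (at s)) (at (fst p)) = 0"
      unfolding G by (simp add: Gc_def D1_def numeral_2_eq_2 algebra_simps)
  qed
  show ?thesis using s X1 X2 ode by blast
qed



lemma part1:
  assumes U: "open U" and cU: "connected U"
    and sm: "\<forall>i\<in>{1, 2}. \<forall>j\<in>{1, 2}. \<forall>k\<in>{1, 2}. smooth_on U (Gc \<Gamma> i j k)"
    and h111: "\<forall>p\<in>U. \<Gamma> 1 1 1 (fst p) = 0" and h112: "\<forall>p\<in>U. \<Gamma> 1 1 2 (fst p) = 0"
    and X: "X \<in> Kalpha \<Gamma> U \<alpha>" and nc: "\<not> (\<exists>c. \<forall>p\<in>U. X 1 p = 0 \<and> X 2 p = c)"
  shows "star \<Gamma> U \<alpha>"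
proof -
  obtain v where v1: "smooth1 (fst ` U) v" and X1: "\<forall>q\<in>U. X 1 q = 0"
    and X2: "\<forall>q\<in>U. X 2 q = exp (\<alpha> * complex_of_real (snd q)) * v (fst q)"
    and eqs: "\<forall>p\<in>U. \<forall>i\<in>{1,2}. \<forall>j\<in>{1,2}. \<forall>k\<in>{1,2}. Keq \<Gamma> X p i j k = 0"
    using Kalpha_data[OF U X] by blast
  let ?P = "fst ` U"
  have cP: "connected ?P"
    by (rule connected_continuous_image[OF continuous_on_fst[OF continuous_on_id] cU])
  define g where "g s = complex_of_real (\<Gamma> 1 2 2 s) + complex_of_real (\<Gamma> 2 1 2 s)" for s
  define z where "z = Dn 1 v"
  have E: "(Gc \<Gamma> 1 2 1 p + Gc \<Gamma> 2 1 1 p) * Dn 1 v (fst p) = 0 \<and>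
     Gc \<Gamma> 1 2 1 p * (\<alpha> * v (fst p)) + Gc \<Gamma> 2 2 1 p * Dn 1 v (fst p) = 0 \<and>
     Gc \<Gamma> 2 2 1 p * Dn 1 v (fst p) + Gc \<Gamma> 2 1 1 p * (\<alpha> * v (fst p)) = 0 \<and>
     Gc \<Gamma> 2 2 1 p * (\<alpha> * v (fst p)) = 0 \<and>
     Dn 2 v (fst p) - Gc \<Gamma> 1 1 1 p * Dn 1 v (fst p) - Gc \<Gamma> 1 1 2 p * (\<alpha> * v (fst p)) + (Gc \<Gamma> 1 2 2 p + Gc \<Gamma> 2 1 2 p) * Dn 1 v (fst p) = 0 \<and>
     \<alpha> * Dn 1 v (fst p) - Gc \<Gamma> 1 2 1 p * Dn 1 v (fst p) + Gc \<Gamma> 2 2 2 p * Dn 1 v (fst p) = 0 \<and>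
     \<alpha> * Dn 1 v (fst p) - Gc \<Gamma> 2 1 1 p * Dn 1 v (fst p) + Gc \<Gamma> 2 2 2 p * Dn 1 v (fst p) = 0 \<and>
     \<alpha>^2 * v (fst p) - Gc \<Gamma> 2 2 1 p * Dn 1 v (fst p) + Gc \<Gamma> 2 2 2 p * (\<alpha> * v (fst p)) = 0"
    if p: "p \<in> U" for p
  proof -
    have "\<forall>i\<in>{1,2}. \<forall>j\<in>{1,2}. \<forall>k\<in>{1,2}. Keq \<Gamma> X p i j k = 0" using eqs p by simp
    then show ?thesis unfolding vexp_eqs[OF U v1 X1 X2 p] .
  qed
  have zd: "\<forall>x\<in>?P. (z has_vector_derivative (- g x * z x)) (at x)"
  proof
    fix x assume "x \<in> ?P"
    then obtain p where p: "p \<in> U" "x = fst p" by (rule imageE) simp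
    have "Dn 1 v differentiable at x" using v1 \<open>x \<in> ?P\<close> unfolding smooth1_def by blast
    then have d: "(z has_vector_derivative Dn 2 v x) (at x)"
      unfolding z_def by (simp add: numeral_2_eq_2 D1_def vd_at)
    have G: "Gc \<Gamma> 1 1 1 p = 0" "Gc \<Gamma> 1 1 2 p = 0" using h111 h112 p by (simp_all add: Gc_def)
    have "Dn 2 v x = - g x * z x"
      using conjunct1[OF conjunct2[OF conjunct2[OF conjunct2[OF conjunct2[OF E[OF p(1)]]]]]] p(2) G
      by (simp add: g_def z_def Gc_def algebra_simps eq_neg_iff_add_eq_0)
    then show "(z has_vector_derivative (- g x * z x)) (at x)" using d by simp
  qed
  have gc: "continuous_on ?P g"
  proof (rule continuous_at_imp_continuous_on, rule ballI)
    fix x assume "x \<in> ?P"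
    then obtain p where p: "p \<in> U" "x = fst p" by (rule imageE) simp
    have "pd_exists 1 (Gc \<Gamma> 1 2 2) p" "pd_exists 1 (Gc \<Gamma> 2 1 2) p"
      using sm p(1) unfolding smooth_on_def by (metis insertCI pds.simps(1) empty_subsetI set_empty)+
    then have "(\<lambda>s. complex_of_real (\<Gamma> 1 2 2 s)) differentiable at x" "(\<lambda>s. complex_of_real (\<Gamma> 2 1 2 s)) differentiable at x"
      using p(2) by (simp_all add: pde1 pde1' Gc_def)
    then have "g differentiable at x" unfolding g_def by (rule differentiable_add)
    then show "isCont g x" by (rule differentiable_imp_continuous_within)
  qed
  show ?thesis
  proof (cases "\<exists>x0\<in>?P. z x0 = 0")
    case True
    then obtain x0 where x0: "x0 \<in> ?P" "z x0 = 0" by blast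
    have z0: "\<forall>x\<in>?P. z x = 0"
      using ode_unique[OF cP gc zd x0(1) _ x0(2)] by blast
    have vd: "\<forall>x\<in>?P. (v has_vector_derivative 0) (at x)"
    proof
      fix x assume x: "x \<in> ?P"
      have "v differentiable at x" using v1 x unfolding smooth1_def by (metis Dn.simps(1))
      then have "(v has_vector_derivative Dn 1 v x) (at x)" by (simp add: D1_def vd_at)
      moreover have "z x = 0" by (rule bspec[OF z0 x])
      ultimately show "(v has_vector_derivative 0) (at x)" by (simp add: z_def)
    qed
    define c where "c = v x0"
    have vc: "\<forall>x\<in>?P. v x = c" unfolding c_def using zero_deriv_const[OF cP vd x0(1)] by blast
    have X2c: "\<forall>q\<in>U. X 2 q = exp (\<alpha> * complex_of_real (snd q)) * c" using X2 vc by simp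
    have a0: "\<alpha> \<noteq> 0"
    proof
      assume "\<alpha> = 0"
      then have "\<forall>p\<in>U. X 1 p = 0 \<and> X 2 p = c" using X1 X2c by simp
      then show False using nc by blast
    qed
    have c0: "c \<noteq> 0"
    proof
      assume "c = 0"
      then have "\<forall>p\<in>U. X 1 p = 0 \<and> X 2 p = 0" using X1 X2c by simp
      then show False using nc by blast
    qed
    show ?thesis
      unfolding star_def
    proof
      fix p assume p: "p \<in> U"
      have V0: "v (fst p) = c" and V1: "Dn 1 v (fst p) = 0" using vc z0 p by (simp_all add: z_def)
      note E' = E[OF p, unfolded V0 V1]
      have r: "Gc \<Gamma> 1 2 1 p = 0 \<and> Gc \<Gamma> 2 1 1 p = 0 \<and> Gc \<Gamma> 2 2 1 p = 0 \<and> Gc \<Gamma> 2 2 2 p = - \<alpha>"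
        by (rule star_point_A[OF a0 c0]) (use E' in simp_all)
      show "\<Gamma> 1 1 1 (fst p) = 0 \<and> \<Gamma> 1 1 2 (fst p) = 0 \<and> \<Gamma> 1 2 1 (fst p) = 0 \<and>
          \<Gamma> 2 1 1 (fst p) = 0 \<and> \<Gamma> 2 2 1 (fst p) = 0 \<and> complex_of_real (\<Gamma> 2 2 2 (fst p)) = - \<alpha>"
        using r h111 h112 p by (simp add: Gc_def)
    qed
  next
    case False
    show ?thesis
      unfolding star_def
    proof
      fix p assume p: "p \<in> U"
      have V1: "Dn 1 v (fst p) \<noteq> 0" using False p by (auto simp: z_def)
      note E' = E[OF p]
      have r: "Gc \<Gamma> 1 2 1 p = 0 \<and> Gc \<Gamma> 2 1 1 p = 0 \<and> Gc \<Gamma> 2 2 1 p = 0 \<and> Gc \<Gamma> 2 2 2 p = - \<alpha>"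
        by (rule star_point_B[where Va="v (fst p)" and \<alpha>=\<alpha>, OF V1]) (use E' in simp_all)
      show "\<Gamma> 1 1 1 (fst p) = 0 \<and> \<Gamma> 1 1 2 (fst p) = 0 \<and> \<Gamma> 1 2 1 (fst p) = 0 \<and>
          \<Gamma> 2 1 1 (fst p) = 0 \<and> \<Gamma> 2 2 1 (fst p) = 0 \<and> complex_of_real (\<Gamma> 2 2 2 (fst p)) = - \<alpha>"
        using r h111 h112 p by (simp add: Gc_def)
    qed
  qed
qed



lemma powser_ident_interval:
  fixes d :: "nat \<Rightarrow> complex"
  assumes ab: "a < b" and R: "0 < R" and J: "\<forall>t\<in>{a<..<b}. \<bar>t\<bar> < R"
    and sR: "\<forall>z. norm z < R \<longrightarrow> summable (\<lambda>m. d m * z ^ m)"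
    and z: "\<forall>t\<in>{a<..<b}. (\<lambda>m. d m * complex_of_real t ^ m) sums 0"
  shows "d m = 0"
proof -
  have Rr: "(0::real) < R" using R .
  define E where "E = Abs_fps d"
  have En: "\<And>m. E $ m = d m" by (simp add: E_def)
  have geq: "ereal r \<le> fps_conv_radius E" if r: "0 \<le> r" "r < R" for r
  proof -
    have "summable (\<lambda>m. d m * complex_of_real r ^ m)" using sR r by simp
    from conv_radius_geI[OF this] show ?thesis using r by (simp add: fps_conv_radius_def E_def)
  qed
  have sub: "ball (0::complex) R \<subseteq> eball 0 (fps_conv_radius E)"
  proof (rule subsetI)
    fix w :: complex assume "w \<in> ball 0 R"
    then have w: "norm w < R" by simp
    have n0: "0 \<le> norm w" by simp
    have h0: "0 \<le> (norm w + R) / 2" using w n0 Rr by (simp add: add_nonneg_nonneg)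
    have h1: "(norm w + R) / 2 < R" using w by simp
    have g: "ereal ((norm w + R) / 2) \<le> fps_conv_radius E" by (rule geq[OF h0 h1])
    have "norm w < (norm w + R) / 2" using w by simp
    then have "ereal (norm w) < ereal ((norm w + R) / 2)" by simp
    then have "ereal (norm w) < fps_conv_radius E" using g by (rule order.strict_trans2)
    then show "w \<in> eball 0 (fps_conv_radius E)" by simp
  qed
  have hol: "eval_fps E holomorphic_on ball (0::complex) R"
    by (rule holomorphic_on_eval_fps[OF sub])
  define c where "c = (a + b) / 2"
  have cJ: "c \<in> {a<..<b}" using ab by (simp add: c_def)
  have zero: "eval_fps E (complex_of_real t) = 0" if "t \<in> {a<..<b}" for t
    using z that sums_unique[of "\<lambda>m. d m * complex_of_real t ^ m" 0] by (simp add: eval_fps_def En)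
  have lim: "complex_of_real c islimpt (complex_of_real ` {a<..<b})"
    unfolding islimpt_approachable
  proof (intro allI impI)
    fix e :: real assume e: "0 < e"
    define t where "t = c + min e ((b - a) / 2) / 2"
    define m where "m = min e ((b - a) / 2)"
    have m1: "0 < m" using ab e by (simp add: m_def)
    have m2: "m \<le> (b - a) / 2" "m \<le> e" unfolding m_def by (rule min.cobounded2, rule min.cobounded1)
    have t1: "a < t" using ab m1 m2 unfolding t_def c_def m_def[symmetric] by (simp add: field_simps)
    have t2: "t < b" using ab m1 m2 unfolding t_def c_def m_def[symmetric] by (simp add: field_simps)
    have tJ: "t \<in> {a<..<b}" using t1 t2 by simp
    have "t \<noteq> c" using m1 unfolding t_def m_def[symmetric] by simp
    moreover have "dist (complex_of_real t) (complex_of_real c) < e"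
    proof -
      have "dist (complex_of_real t) (complex_of_real c) = \<bar>t - c\<bar>"
        by (simp add: dist_complex_def flip: of_real_diff)
      also have "\<dots> = m / 2" using m1 unfolding t_def m_def[symmetric] by simp
      also have "\<dots> < e" using m1 m2 by simp
      finally show ?thesis .
    qed
    ultimately show "\<exists>x'\<in>complex_of_real ` {a<..<b}. x' \<noteq> complex_of_real c \<and> dist x' (complex_of_real c) < e"
      using tJ by (intro bexI[of _ "complex_of_real t"]) auto
  qed
  have allz: "eval_fps E w = 0" if w: "w \<in> ball 0 R" for w
  proof (rule analytic_continuation[OF hol])
    show "open (ball (0::complex) R)" by simp
    show "connected (ball (0::complex) R)" by simp
    show "complex_of_real ` {a<..<b} \<subseteq> ball 0 R" using J by auto
    show "complex_of_real c \<in> ball 0 R" using J cJ by auto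
    show "complex_of_real c islimpt complex_of_real ` {a<..<b}" by (rule lim)
    show "\<And>z. z \<in> complex_of_real ` {a<..<b} \<Longrightarrow> eval_fps E z = 0" using zero by auto
    show "w \<in> ball 0 R" by (rule w)
  qed
  have "ereal (R/2) \<le> fps_conv_radius E" using R by (intro geq) auto
  then have pos: "0 < fps_conv_radius E" using R by (metis ereal_less(2) half_gt_zero order.strict_trans2)
  have e1: "eval_fps E has_fps_expansion E" by (rule eval_fps_has_fps_expansion[OF pos])
  have ev: "eventually (\<lambda>z. z \<in> ball (0::complex) R) (nhds 0)"
    by (rule eventually_nhds_in_open) (use R in auto)
  have e2: "eval_fps E has_fps_expansion 0"
    unfolding has_fps_expansion_def
    using ev by (auto elim!: eventually_mono simp: allz)
  have "E = 0" using fps_expansion_unique_complex[OF e1 e2] .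
  then show ?thesis using En[of m] by simp
qed



lemma ofr_hvd: "((\<lambda>t. complex_of_real t) has_vector_derivative 1) (at t)"
  using has_vector_derivative_of_real[OF DERIV_ident, of "at t"] by simp

lemma const_on_convex:
  fixes f :: "real \<Rightarrow> complex"
  assumes T: "convex T" and d: "\<forall>t\<in>T. (f has_vector_derivative 0) (at t)"
  shows "\<exists>c. \<forall>t\<in>T. f t = c"
proof (rule has_derivative_zero_constant[OF T])
  fix t assume "t \<in> T"
  then have "(f has_vector_derivative 0) (at t)" by (rule bspec[OF d])
  then show "(f has_derivative (\<lambda>h. 0)) (at t within T)"
    by (rule hvd_within0[OF has_vector_derivative_at_within])
qed

lemma quad:
  fixes F :: "real \<Rightarrow> complex"
  assumes T: "convex T" and sm: "smooth1 T F" and d3: "\<forall>t\<in>T. Dn 3 F t = 0"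
  shows "\<exists>c0 c1 c2. \<forall>t\<in>T. F t = c0 + c1 * complex_of_real t + c2 * (complex_of_real t * complex_of_real t)"
proof -
  have dif: "Dn k F differentiable at t" if "t \<in> T" for k t using sm that unfolding smooth1_def by blast
  have hv: "(Dn k F has_vector_derivative Dn (Suc k) F t) (at t)" if "t \<in> T" for k t
    using vd_at[OF dif[OF that, of k]] by (simp add: D1_def)
  have "\<exists>c. \<forall>t\<in>T. Dn 2 F t = c"
  proof (rule const_on_convex[OF T], rule ballI)
    fix t assume t: "t \<in> T"
    have "Dn (Suc 2) F t = 0" using bspec[OF d3 t] by (simp add: numeral_3_eq_3)
    then show "(Dn 2 F has_vector_derivative 0) (at t)" using hv[OF t, of 2] by simp
  qed
  then obtain C2 where C2: "\<forall>t\<in>T. Dn 2 F t = C2" by blast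
  have "\<exists>c. \<forall>t\<in>T. Dn 1 F t - C2 * complex_of_real t = c"
  proof (rule const_on_convex[OF T], rule ballI)
    fix t assume t: "t \<in> T"
    have "((\<lambda>t. Dn 1 F t - C2 * complex_of_real t) has_vector_derivative Dn (Suc 1) F t - C2 * 1) (at t)"
      by (rule has_vector_derivative_diff[OF hv[OF t] has_vector_derivative_mult_right[OF ofr_hvd]])
    moreover have "Dn (Suc 1) F t = C2" using bspec[OF C2 t] by (simp add: numeral_2_eq_2)
    ultimately show "((\<lambda>t. Dn 1 F t - C2 * complex_of_real t) has_vector_derivative 0) (at t)" by simp
  qed
  then obtain C1 where C1: "\<forall>t\<in>T. Dn 1 F t - C2 * complex_of_real t = C1" by blast
  have "\<exists>c. \<forall>t\<in>T. F t - C1 * complex_of_real t - (C2 / 2) * (complex_of_real t * complex_of_real t) = c"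
  proof (rule const_on_convex[OF T], rule ballI)
    fix t assume t: "t \<in> T"
    have h0: "(F has_vector_derivative Dn 1 F t) (at t)" using hv[OF t, of 0] by simp
    have hq: "((\<lambda>t. complex_of_real t * complex_of_real t) has_vector_derivative
                (complex_of_real t * 1 + 1 * complex_of_real t)) (at t)"
      by (rule has_vector_derivative_mult[OF ofr_hvd ofr_hvd])
    have "((\<lambda>t. F t - C1 * complex_of_real t - (C2 / 2) * (complex_of_real t * complex_of_real t)) has_vector_derivative
           Dn 1 F t - C1 * 1 - (C2 / 2) * (complex_of_real t * 1 + 1 * complex_of_real t)) (at t)"
      by (rule has_vector_derivative_diff[OF has_vector_derivative_diff[OF h0 has_vector_derivative_mult_right[OF ofr_hvd]]
             has_vector_derivative_mult_right[OF hq]])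
    moreover have "Dn 1 F t - C1 * 1 - (C2 / 2) * (complex_of_real t * 1 + 1 * complex_of_real t) = 0"
      using bspec[OF C1 t] by (simp add: algebra_simps)
    ultimately show "((\<lambda>t. F t - C1 * complex_of_real t - (C2 / 2) * (complex_of_real t * complex_of_real t)) has_vector_derivative 0) (at t)"
      by simp
  qed
  then obtain C0 where C0: "\<forall>t\<in>T. F t - C1 * complex_of_real t - (C2 / 2) * (complex_of_real t * complex_of_real t) = C0" by blast
  show ?thesis
  proof (intro exI ballI)
    fix t assume t: "t \<in> T"
    show "F t = C0 + C1 * complex_of_real t + C2 / 2 * (complex_of_real t * complex_of_real t)"
      using bspec[OF C0 t] by (simp add: algebra_simps)
  qed
qed

lemma KC_vf:
  assumes "vf u W \<in> KC \<Gamma> U"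
  shows "smooth_on U u" "smooth_on U W" "\<forall>p\<in>U. \<forall>i\<in>{1,2}. \<forall>j\<in>{1,2}. \<forall>k\<in>{1,2}. Keq \<Gamma> (vf u W) p i j k = 0"
  using assms by (simp_all add: KC_iff vf_def)

lemma Wyyy:
  assumes U: "open U" and st: "star \<Gamma> U 0" and K: "vf u W \<in> KC \<Gamma> U" and q: "q \<in> U"
  shows "pd 2 (pd 2 (pd 2 W)) q = 0"
proof -
  note KK = KC_vf[OF K]
  have e221: "pd 2 (pd 2 u) p = 0" if "p \<in> U" for p
  proof -
    have "Keq \<Gamma> (vf u W) p 2 2 1 = 0" using KK(3) that by simp
    then show ?thesis using gen_eqs(1)[OF U st that, of u W] by simp
  qed
  have e222: "\<forall>p\<in>U. pd 2 (pd 2 W) p = (\<lambda>p. - (Gc \<Gamma> 1 2 2 p + Gc \<Gamma> 2 1 2 p) * pd 2 u p) p"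
  proof
    fix p assume p: "p \<in> U"
    have "Keq \<Gamma> (vf u W) p 2 2 2 = 0" using KK(3) p by simp
    then show "pd 2 (pd 2 W) p = (\<lambda>p. - (Gc \<Gamma> 1 2 2 p + Gc \<Gamma> 2 1 2 p) * pd 2 u p) p"
      using gen_eqs(3)[OF U st p, of u W] by (simp add: algebra_simps eq_neg_iff_add_eq_0)
  qed
  have "pd 2 (pd 2 (pd 2 W)) q = pd 2 (\<lambda>p. - (Gc \<Gamma> 1 2 2 p + Gc \<Gamma> 2 1 2 p) * pd 2 u p) q"
    using pd_local[OF U q e222] by simp
  also have "\<dots> = vector_derivative (\<lambda>t. - (Gc \<Gamma> 1 2 2 (fst q, t) + Gc \<Gamma> 2 1 2 (fst q, t)) * pd 2 u (fst q, t)) (at (snd q))"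
    by (simp add: pd2)
  also have "\<dots> = - (Gc \<Gamma> 1 2 2 q + Gc \<Gamma> 2 1 2 q) * pd 2 (pd 2 u) q"
  proof -
    have "set [2::nat] \<subseteq> {1,2}" by simp
    then have "pd_exists 2 (pds [2] u) q" using KK(1) q unfolding smooth_on_def by blast
    then have "(\<lambda>t. pd 2 u (fst q, t)) differentiable at (snd q)" by (simp add: pde2)
    from has_vector_derivative_mult_right[OF vd_at[OF this], of "- (Gc \<Gamma> 1 2 2 q + Gc \<Gamma> 2 1 2 q)"]
    show ?thesis by (simp add: Gc_def pd2 vector_derivative_at)
  qed
  also have "\<dots> = 0" using e221[OF q] by simp
  finally show ?thesis .
qed



definition Lc :: "complex \<Rightarrow> complex \<Rightarrow> nat \<Rightarrow> nat \<Rightarrow> complex" where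
  "Lc Y H n j =
    (if n = 2 then [1/(2*H*H), -2/(2*H*H), 1/(2*H*H)] ! j
     else if n = 1 then [-1/(2*H) - 2*Y/(2*H*H), 4*Y/(2*H*H), 1/(2*H) - 2*Y/(2*H*H)] ! j
     else if n = 0 then [-Y*(-1/(2*H) - 2*Y/(2*H*H)) - Y*Y/(2*H*H),
                         1 - Y*(4*Y/(2*H*H)) + Y*Y*2/(2*H*H),
                         -Y*(1/(2*H) - 2*Y/(2*H*H)) - Y*Y/(2*H*H)] ! j
     else 0)"

definition qc :: "complex \<Rightarrow> complex \<Rightarrow> complex \<Rightarrow> nat \<Rightarrow> complex" where
  "qc c0 c1 c2 m = (if m = 0 then c0 else if m = 1 then c1 else if m = 2 then c2 else 0)"

lemma coef3:
  fixes c0 c1 c2 Y H :: complex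
  assumes H: "H \<noteq> 0"
  shows "qc c0 c1 c2 n =
      Lc Y H n 0 * (c0 + c1 * (Y - H) + c2 * ((Y - H) * (Y - H)))
    + Lc Y H n 1 * (c0 + c1 * Y + c2 * (Y * Y))
    + Lc Y H n 2 * (c0 + c1 * (Y + H) + c2 * ((Y + H) * (Y + H)))"
proof -
  consider "n = 0" | "n = 1" | "n = 2" | "n > 2" by linarith
  then show ?thesis
  proof cases
    case 1 then show ?thesis using H by (simp add: Lc_def qc_def field_simps, (simp add: algebra_simps)?)
  next
    case 2 then show ?thesis using H by (simp add: Lc_def qc_def field_simps, (simp add: algebra_simps)?)
  next
    case 3 then show ?thesis using H by (simp add: Lc_def qc_def field_simps, (simp add: algebra_simps)?)
  next
    case 4 then show ?thesis by (simp add: Lc_def qc_def)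
  qed
qed

lemma qc_sums:
  "(\<lambda>m. qc c0 c1 c2 m * z ^ m) sums (c0 + c1 * z + c2 * (z * z))"
proof -
  have "(\<lambda>m. qc c0 c1 c2 m * z ^ m) sums (\<Sum>m\<in>{0,1,2}. qc c0 c1 c2 m * z ^ m)"
    by (rule sums_finite) (auto simp: qc_def)
  then show ?thesis by (simp add: qc_def power2_eq_square add.assoc)
qed



lemma powser_ident_ball:
  fixes d :: "nat \<Rightarrow> complex"
  assumes r: "0 < r" and z: "\<forall>t\<in>ball y0 r. (\<lambda>m. d m * complex_of_real t ^ m) sums 0"
  shows "d m = 0"
proof -
  define h where "h = r / 2"
  have h: "0 < h" "h < r" using r by (simp_all add: h_def)
  have inb: "t \<in> ball y0 r" if "\<bar>t - y0\<bar> < r" for t using that by (simp add: dist_real_def abs_minus_commute)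
  show ?thesis
  proof (cases "0 \<le> y0")
    case True
    show ?thesis
    proof (rule powser_ident_interval[of y0 "y0 + h" "y0 + h"])
      show "y0 < y0 + h" using h by simp
      show "0 < y0 + h" using h True by simp
      show "\<forall>t\<in>{y0<..<y0 + h}. \<bar>t\<bar> < y0 + h" using True by auto
      have "y0 + h \<in> ball y0 r" by (rule inb) (use h in simp)
      then have "(\<lambda>m. d m * complex_of_real (y0 + h) ^ m) sums 0" by (rule bspec[OF z])
      then have s: "summable (\<lambda>m. d m * complex_of_real (y0 + h) ^ m)" by (rule sums_summable)
      show "\<forall>z. norm z < y0 + h \<longrightarrow> summable (\<lambda>m. d m * z ^ m)"
      proof (intro allI impI)
        fix z :: complex assume "norm z < y0 + h"
        moreover have "norm (complex_of_real (y0 + h)) = y0 + h" using True h by (simp only: norm_of_real abs_of_nonneg)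
        ultimately have "norm z < norm (complex_of_real (y0 + h))" by simp
        then show "summable (\<lambda>m. d m * z ^ m)" by (rule powser_inside[OF s])
      qed
      show "\<forall>t\<in>{y0<..<y0 + h}. (\<lambda>m. d m * complex_of_real t ^ m) sums 0"
      proof
        fix t assume "t \<in> {y0<..<y0 + h}"
        then have "\<bar>t - y0\<bar> < r" using h by auto
        then show "(\<lambda>m. d m * complex_of_real t ^ m) sums 0" by (rule bspec[OF z inb])
      qed
    qed
  next
    case False
    show ?thesis
    proof (rule powser_ident_interval[of "y0 - h" y0 "h - y0"])
      show "y0 - h < y0" using h by simp
      show "0 < h - y0" using h False by simp
      show "\<forall>t\<in>{y0 - h<..<y0}. \<bar>t\<bar> < h - y0" using False by auto
      have "y0 - h \<in> ball y0 r" by (rule inb) (use h in simp)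
      then have "(\<lambda>m. d m * complex_of_real (y0 - h) ^ m) sums 0" by (rule bspec[OF z])
      then have s: "summable (\<lambda>m. d m * complex_of_real (y0 - h) ^ m)" by (rule sums_summable)
      show "\<forall>z. norm z < h - y0 \<longrightarrow> summable (\<lambda>m. d m * z ^ m)"
      proof (intro allI impI)
        fix z :: complex assume "norm z < h - y0"
        moreover have "norm (complex_of_real (y0 - h)) = h - y0" using False h by (simp only: norm_of_real)
        ultimately have "norm z < norm (complex_of_real (y0 - h))" by simp
        then show "summable (\<lambda>m. d m * z ^ m)" by (rule powser_inside[OF s])
      qed
      show "\<forall>t\<in>{y0 - h<..<y0}. (\<lambda>m. d m * complex_of_real t ^ m) sums 0"
      proof
        fix t assume "t \<in> {y0 - h<..<y0}"
        then have "\<bar>t - y0\<bar> < r" using h by auto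
        then show "(\<lambda>m. d m * complex_of_real t ^ m) sums 0" by (rule bspec[OF z inb])
      qed
    qed
  qed
qed



lemma local_rep:
  assumes U: "open U" and st: "star \<Gamma> U 0" and K: "vf u W \<in> KC \<Gamma> U"
    and ser: "\<forall>p\<in>U. (\<lambda>n. w n (fst p) * complex_of_real (snd p) ^ n) sums W p"
    and x0: "x0 \<in> fst ` U"
  shows "\<exists>A t0 t1 t2 l0 l1 l2. open A \<and> x0 \<in> A \<and> (\<forall>s\<in>A. (s, t0) \<in> U \<and> (s, t1) \<in> U \<and> (s, t2) \<in> U)
           \<and> (\<forall>s\<in>A. w n s = l0 * W (s, t0) + l1 * W (s, t1) + l2 * W (s, t2))"
proof -
  obtain q where q: "q \<in> U" "x0 = fst q" using x0 by (rule imageE) simp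
  define y0 where "y0 = snd q"
  have q0: "(x0, y0) \<in> U" using q by (simp add: y0_def)
  obtain A B where A: "open A" and B: "open B" and AB: "(x0, y0) \<in> A \<times> B" and ABU: "A \<times> B \<subseteq> U"
    using open_prod_elim[OF U q0] by blast
  have y0B: "y0 \<in> B" and x0A: "x0 \<in> A" using AB by auto
  obtain r where r: "0 < r" and rB: "ball y0 r \<subseteq> B" using B y0B open_contains_ball by blast
  define h where "h = r / 2"
  have h: "0 < h" "h < r" using r by (simp_all add: h_def)
  define t0 where "t0 = y0 - h"
  define t1 where "t1 = y0"
  define t2 where "t2 = y0 + h"
  let ?T = "ball y0 r"
  have tT: "t0 \<in> ?T" "t1 \<in> ?T" "t2 \<in> ?T" using h r by (simp_all add: t0_def t1_def t2_def dist_real_def)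
  have inU: "(s, t) \<in> U" if "s \<in> A" "t \<in> ?T" for s t
  proof -
    have "t \<in> B" using rB that(2) by (rule subsetD)
    then have "(s, t) \<in> A \<times> B" using that(1) by simp
    then show ?thesis using ABU by (rule subsetD[rotated])
  qed
  define Y where "Y = complex_of_real y0"
  define H where "H = complex_of_real h"
  have H0: "H \<noteq> 0" using h by (simp add: H_def)
  have main: "w n s = Lc Y H n 0 * W (s, t0) + Lc Y H n 1 * W (s, t1) + Lc Y H n 2 * W (s, t2)"
    if s: "s \<in> A" for s
  proof -
    have smW: "smooth_on U W" using KC_vf(2)[OF K] .
    have sm: "smooth1 ?T (\<lambda>t. W (s, t))"
      by (rule smooth_slice2[OF smW]) (use inU[OF s] in blast)
    have d3: "\<forall>t\<in>?T. Dn 3 (\<lambda>t. W (s, t)) t = 0"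
    proof
      fix t assume t: "t \<in> ?T"
      have "Dn 3 (\<lambda>t. W (s, t)) t = pds (replicate 3 2) W (s, t)" by (rule pds_rep2[symmetric])
      also have "\<dots> = pd 2 (pd 2 (pd 2 W)) (s, t)" by (simp add: numeral_3_eq_3)
      also have "\<dots> = 0" by (rule Wyyy[OF U st K inU[OF s t]])
      finally show "Dn 3 (\<lambda>t. W (s, t)) t = 0" .
    qed
    obtain k0 k1 k2 where k: "\<forall>t\<in>?T. W (s, t) = k0 + k1 * complex_of_real t + k2 * (complex_of_real t * complex_of_real t)"
      using quad[OF convex_ball sm d3] by blast
    have coef: "w m s = qc k0 k1 k2 m" for m
    proof -
      have "(\<lambda>m. w m s - qc k0 k1 k2 m) m = 0"
      proof (rule powser_ident_ball[OF r])
        show "\<forall>t\<in>?T. (\<lambda>m. (w m s - qc k0 k1 k2 m) * complex_of_real t ^ m) sums 0"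
        proof
          fix t assume t: "t \<in> ?T"
          have s1: "(\<lambda>m. w m s * complex_of_real t ^ m) sums W (s, t)"
            using bspec[OF ser inU[OF s t]] by simp
          have s2: "(\<lambda>m. qc k0 k1 k2 m * complex_of_real t ^ m) sums W (s, t)"
            using qc_sums[of k0 k1 k2 "complex_of_real t"] bspec[OF k t] by simp
          have "(\<lambda>m. w m s * complex_of_real t ^ m - qc k0 k1 k2 m * complex_of_real t ^ m) sums (W (s, t) - W (s, t))"
            by (rule sums_diff[OF s1 s2])
          then show "(\<lambda>m. (w m s - qc k0 k1 k2 m) * complex_of_real t ^ m) sums 0"
            by (simp add: left_diff_distrib)
        qed
      qed
      then show ?thesis by simp
    qed
    have W0: "W (s, t0) = k0 + k1 * (Y - H) + k2 * ((Y - H) * (Y - H))"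
      using bspec[OF k tT(1)] by (simp add: t0_def Y_def H_def)
    have W1: "W (s, t1) = k0 + k1 * Y + k2 * (Y * Y)"
      using bspec[OF k tT(2)] by (simp add: t1_def Y_def)
    have W2: "W (s, t2) = k0 + k1 * (Y + H) + k2 * ((Y + H) * (Y + H))"
      using bspec[OF k tT(3)] by (simp add: t2_def Y_def H_def)
    show ?thesis unfolding coef W0 W1 W2 by (rule coef3[OF H0])
  qed
  show ?thesis
  proof (intro exI conjI)
    show "open A" by (rule A)
    show "x0 \<in> A" by (rule x0A)
    show "\<forall>s\<in>A. (s, t0) \<in> U \<and> (s, t1) \<in> U \<and> (s, t2) \<in> U" using inU tT by blast
    show "\<forall>s\<in>A. w n s = Lc Y H n 0 * W (s, t0) + Lc Y H n 1 * W (s, t1) + Lc Y H n 2 * W (s, t2)"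
      using main by blast
  qed
qed



lemma part2a:
  assumes U: "open U" and st: "star \<Gamma> U \<alpha>" and K: "vf u w \<in> KC \<Gamma> U"
  shows "(\<forall>p\<in>U. \<alpha> * pd 2 u p + pd 2 (pd 2 u) p = 0) \<and>
         (\<forall>p\<in>U. (Gc \<Gamma> 1 2 2 p + Gc \<Gamma> 2 1 2 p) * pd 1 w p + pd 1 (pd 1 w) p = 0)"
proof (intro conjI ballI)
  fix p assume p: "p \<in> U"
  have "\<forall>i\<in>{1,2}. \<forall>j\<in>{1,2}. \<forall>k\<in>{1,2}. Keq \<Gamma> (vf u w) p i j k = 0" using KC_vf(3)[OF K] p by simp
  then have k1: "Keq \<Gamma> (vf u w) p 2 2 1 = 0" and k2: "Keq \<Gamma> (vf u w) p 1 1 2 = 0" by simp_all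
  show "\<alpha> * pd 2 u p + pd 2 (pd 2 u) p = 0" using k1 gen_eqs(1)[OF U st p, of u w] by (simp add: add.commute)
  show "(Gc \<Gamma> 1 2 2 p + Gc \<Gamma> 2 1 2 p) * pd 1 w p + pd 1 (pd 1 w) p = 0"
    using k2 gen_eqs(2)[OF U st p, of u w] by (simp add: add.commute)
qed

lemma part2c:
  assumes U: "open U" and st: "star \<Gamma> U 0" and K: "vf u W \<in> KC \<Gamma> U"
    and ser: "\<forall>p\<in>U. (\<lambda>n. w n (fst p) * complex_of_real (snd p) ^ n) sums W p"
  shows "vf (\<lambda>p. 0) (\<lambda>p. w n (fst p)) \<in> Kalpha \<Gamma> U 0"
proof -
  let ?P = "fst ` U"
  have oP: "open ?P" using U by (rule open_image_fst)
  have smW: "smooth_on U W" using KC_vf(2)[OF K] .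
  define g where "g s = complex_of_real (\<Gamma> 1 2 2 s) + complex_of_real (\<Gamma> 2 1 2 s)" for s
  have loc: "\<exists>A. open A \<and> x0 \<in> A \<and> smooth1 A (w n) \<and> Dn 2 (w n) x0 + g x0 * Dn 1 (w n) x0 = 0"
    if x0: "x0 \<in> ?P" for x0
  proof -
    obtain A t0 t1 t2 l0 l1 l2 where A: "open A" and x0A: "x0 \<in> A"
      and inU: "\<forall>s\<in>A. (s, t0) \<in> U \<and> (s, t1) \<in> U \<and> (s, t2) \<in> U"
      and rep: "\<forall>s\<in>A. w n s = l0 * W (s, t0) + l1 * W (s, t1) + l2 * W (s, t2)"
      using local_rep[OF U st K ser x0, of n] by blast
    have s0: "smooth1 A (\<lambda>s. W (s, t0))" by (rule smooth_slice1[OF smW]) (use inU in blast)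
    have s1: "smooth1 A (\<lambda>s. W (s, t1))" by (rule smooth_slice1[OF smW]) (use inU in blast)
    have s2: "smooth1 A (\<lambda>s. W (s, t2))" by (rule smooth_slice1[OF smW]) (use inU in blast)
    define h1 where "h1 = (\<lambda>s. l0 * W (s, t0) + l1 * W (s, t1))"
    define hh where "hh = (\<lambda>s. 1 * h1 s + l2 * W (s, t2))"
    have sh1: "smooth1 A h1" unfolding h1_def by (rule lin_comb_smooth[OF A s0 s1])
    have shh: "smooth1 A hh" unfolding hh_def by (rule lin_comb_smooth[OF A sh1 s2])
    have eqA: "\<forall>s\<in>A. hh s = w n s" using rep by (simp add: hh_def h1_def)
    have sw: "smooth1 A (w n)" by (rule smooth1_local[OF A eqA shh])
    have Dk: "Dn k (w n) x0 = l0 * Dn k (\<lambda>s. W (s, t0)) x0 + l1 * Dn k (\<lambda>s. W (s, t1)) x0 + l2 * Dn k (\<lambda>s. W (s, t2)) x0" for k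
    proof -
      have "Dn k (w n) x0 = Dn k hh x0" using bspec[OF Dn_local[OF A eqA, of k] x0A] by simp
      also have "\<dots> = 1 * Dn k h1 x0 + l2 * Dn k (\<lambda>s. W (s, t2)) x0"
        using bspec[OF lin_comb[OF A sh1 s2, of k 1 l2] x0A] by (simp add: hh_def)
      also have "Dn k h1 x0 = l0 * Dn k (\<lambda>s. W (s, t0)) x0 + l1 * Dn k (\<lambda>s. W (s, t1)) x0"
        using bspec[OF lin_comb[OF A s0 s1, of k l0 l1] x0A] by (simp add: h1_def)
      finally show ?thesis by simp
    qed
    have ode_j: "Dn 2 (\<lambda>s. W (s, t)) x0 + g x0 * Dn 1 (\<lambda>s. W (s, t)) x0 = 0" if tU: "(x0, t) \<in> U" for t
    proof -
      have "(Gc \<Gamma> 1 2 2 (x0, t) + Gc \<Gamma> 2 1 2 (x0, t)) * pd 1 W (x0, t) + pd 1 (pd 1 W) (x0, t) = 0"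
        using part2a[OF U st K] tU by blast
      moreover have "pd 1 W (x0, t) = Dn 1 (\<lambda>s. W (s, t)) x0"
        using pds_rep1[of 1 W x0 t] by simp
      moreover have "pd 1 (pd 1 W) (x0, t) = Dn 2 (\<lambda>s. W (s, t)) x0"
        using pds_rep1[of 2 W x0 t] by (simp add: numeral_2_eq_2)
      ultimately show ?thesis by (simp add: g_def Gc_def algebra_simps)
    qed
    have u0: "(x0, t0) \<in> U" "(x0, t1) \<in> U" "(x0, t2) \<in> U" using inU x0A by blast+
    have "Dn 2 (w n) x0 + g x0 * Dn 1 (w n) x0 =
            l0 * (Dn 2 (\<lambda>s. W (s, t0)) x0 + g x0 * Dn 1 (\<lambda>s. W (s, t0)) x0)
          + l1 * (Dn 2 (\<lambda>s. W (s, t1)) x0 + g x0 * Dn 1 (\<lambda>s. W (s, t1)) x0)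
          + l2 * (Dn 2 (\<lambda>s. W (s, t2)) x0 + g x0 * Dn 1 (\<lambda>s. W (s, t2)) x0)"
      unfolding Dk[of 2] Dk[of 1] by (simp add: algebra_simps)
    also have "\<dots> = 0" using ode_j[OF u0(1)] ode_j[OF u0(2)] ode_j[OF u0(3)] by simp
    finally show ?thesis using A x0A sw by blast
  qed
  have sw: "smooth1 ?P (w n)"
    unfolding smooth1_def
  proof (intro allI ballI)
    fix k x0 assume "x0 \<in> ?P"
    then obtain A where "x0 \<in> A" "smooth1 A (w n)" using loc by blast
    then show "Dn k (w n) differentiable at x0" unfolding smooth1_def by blast
  qed
  have s1: "smooth_on U (\<lambda>q. (\<lambda>_. 1) (snd q) * w n (fst q))"
    by (rule prod_smooth[OF oP smooth1_const sw U subset_refl])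
  then have swU: "smooth_on U (\<lambda>p. w n (fst p))" by simp
  show ?thesis
  proof (rule part2b_back[OF U st swU])
    show "\<forall>p\<in>U. vf (\<lambda>p. 0) (\<lambda>p. w n (fst p)) 1 p = 0 \<and>
            vf (\<lambda>p. 0) (\<lambda>p. w n (fst p)) 2 p = exp (0 * complex_of_real (snd p)) * w n (fst p)"
      by (simp add: vf_def)
    show "\<forall>p\<in>U. complex_of_real (\<Gamma> 1 2 2 (fst p) + \<Gamma> 2 1 2 (fst p)) * vector_derivative (w n) (at (fst p))
                   + vector_derivative (\<lambda>s. vector_derivative (w n) (at s)) (at (fst p)) = 0"
    proof
      fix p assume "p \<in> U"
      then have "fst p \<in> ?P" by simp
      then obtain A where "Dn 2 (w n) (fst p) + g (fst p) * Dn 1 (w n) (fst p) = 0" using loc by blast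
      then show "complex_of_real (\<Gamma> 1 2 2 (fst p) + \<Gamma> 2 1 2 (fst p)) * vector_derivative (w n) (at (fst p))
                   + vector_derivative (\<lambda>s. vector_derivative (w n) (at s)) (at (fst p)) = 0"
        by (simp add: g_def D1_def numeral_2_eq_2 algebra_simps)
    qed
  qed
qed

lemma KR_y:
  assumes U: "open U" and st: "star \<Gamma> U 0"
  shows "vf (\<lambda>p. 0) (\<lambda>p. complex_of_real (snd p)) \<in> KR \<Gamma> U"
proof -
  let ?X = "vf (\<lambda>p. 0) (\<lambda>p. complex_of_real (snd p))"
  have oP: "open (fst ` U)" using U by (rule open_image_fst)
  have X1: "\<forall>q\<in>U. ?X 1 q = 0" by (simp add: vf_def)
  have X2: "\<forall>q\<in>U. ?X 2 q = (\<lambda>t. complex_of_real t) (snd q) * (\<lambda>_. 1) (fst q)" by (simp add: vf_def)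
  have s0: "smooth_on U (\<lambda>q. (\<lambda>_. 0) (snd q) * (\<lambda>_. 0) (fst q))"
    by (rule prod_smooth[OF oP smooth1_const smooth1_const U subset_refl])
  have sX1: "smooth_on U (?X 1)" using s0 by (simp add: vf_def)
  have s2: "smooth_on U (\<lambda>q. (\<lambda>t. complex_of_real t) (snd q) * (\<lambda>_. 1) (fst q))"
    by (rule prod_smooth[OF oP smooth1_ofreal smooth1_const U subset_refl])
  have sX2: "smooth_on U (?X 2)" using s2 by (simp add: vf_def)
  have eqs: "\<forall>p\<in>U. \<forall>i\<in>{1,2}. \<forall>j\<in>{1,2}. \<forall>k\<in>{1,2}. Keq \<Gamma> ?X p i j k = 0"
  proof
    fix p assume p: "p \<in> U"
    have xP: "fst p \<in> fst ` U" using p by simp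
    have G: "Gc \<Gamma> 1 1 1 p = 0" "Gc \<Gamma> 1 1 2 p = 0" "Gc \<Gamma> 1 2 1 p = 0" "Gc \<Gamma> 2 1 1 p = 0"
      "Gc \<Gamma> 2 2 1 p = 0" "Gc \<Gamma> 2 2 2 p = 0"
      using star_at[OF st xP] by (simp_all add: Gc_def)
    note VE = vert_eqs[OF U oP subset_refl smooth1_ofreal smooth1_const X1 X2 p, of \<Gamma>]
    have A: "Dn 1 (\<lambda>t. complex_of_real t) (snd p) = 1" "Dn 2 (\<lambda>t. complex_of_real t) (snd p) = 0"
      using Dn_ofreal(1) Dn_ofreal(2)[of 0] by (simp_all add: numeral_2_eq_2)
    have V: "Dn 1 (\<lambda>_. 1::complex) (fst p) = 0" "Dn 2 (\<lambda>_. 1::complex) (fst p) = 0"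
      using Dn_const[of 0 "1::complex"] Dn_const[of 1 "1::complex"] by (simp_all add: numeral_2_eq_2)
    note VE' = VE[unfolded A V G]
    show "\<forall>i\<in>{1,2}. \<forall>j\<in>{1,2}. \<forall>k\<in>{1,2}. Keq \<Gamma> ?X p i j k = 0"
      unfolding ball8[where Q = "\<lambda>i j k. Keq \<Gamma> ?X p i j k = 0"] using VE' by simp
  qed
  have "?X \<in> KC \<Gamma> U" using sX1 sX2 eqs by (simp add: KC_iff)
  moreover have "\<forall>k\<in>{1,2}. \<forall>p\<in>U. ?X k p \<in> \<real>" by (simp add: vf_def)
  ultimately show ?thesis by (simp add: KR_def)
qed



theorem lemma3p2:
  fixes \<Gamma> :: "nat \<Rightarrow> nat \<Rightarrow> nat \<Rightarrow> real \<Rightarrow> real"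
    and U :: "(real \<times> real) set"
  assumes "open U" and "connected U"
    and "\<forall>i\<in>{1, 2}. \<forall>j\<in>{1, 2}. \<forall>k\<in>{1, 2}. smooth_on U (Gc \<Gamma> i j k)"
    and "\<forall>p\<in>U. \<Gamma> 1 1 1 (fst p) = 0"
    and "\<forall>p\<in>U. \<Gamma> 1 1 2 (fst p) = 0"
  shows
    "(\<forall>\<alpha> X. X \<in> Kalpha \<Gamma> U \<alpha> \<and> \<not> (\<exists>c. \<forall>p\<in>U. X 1 p = 0 \<and> X 2 p = c)
        \<longrightarrow> star \<Gamma> U \<alpha>)
     \<and> (\<forall>\<alpha>. star \<Gamma> U \<alpha> \<longrightarrow>
         (\<forall>u w. vf u w \<in> KC \<Gamma> U \<longrightarrow>
             (\<forall>p\<in>U. \<alpha> * pd 2 u p + pd 2 (pd 2 u) p = 0) \<and>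
             (\<forall>p\<in>U. (Gc \<Gamma> 1 2 2 p + Gc \<Gamma> 2 1 2 p) * pd 1 w p + pd 1 (pd 1 w) p = 0))
       \<and> (\<forall>X. X \<in> Kalpha \<Gamma> U \<alpha> \<longleftrightarrow>
             (\<exists>v :: real \<Rightarrow> complex. smooth_on U (\<lambda>p. v (fst p)) \<and>
                (\<forall>p\<in>U. X 1 p = 0 \<and> X 2 p = exp (\<alpha> * complex_of_real (snd p)) * v (fst p)) \<and>
                (\<forall>p\<in>U. complex_of_real (\<Gamma> 1 2 2 (fst p) + \<Gamma> 2 1 2 (fst p))
                           * vector_derivative v (at (fst p))
                         + vector_derivative (\<lambda>s. vector_derivative v (at s)) (at (fst p)) = 0)))
       \<and> (\<alpha> = 0 \<longrightarrow>
           (\<forall>u W (w :: nat \<Rightarrow> real \<Rightarrow> complex).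
               vf u W \<in> KC \<Gamma> U
               \<and> (\<forall>p\<in>U. (\<lambda>n. w n (fst p) * complex_of_real (snd p) ^ n) sums W p)
               \<longrightarrow> (\<forall>n. vf (\<lambda>p. 0) (\<lambda>p. w n (fst p)) \<in> Kalpha \<Gamma> U 0))
           \<and> vf (\<lambda>p. 0) (\<lambda>p. complex_of_real (snd p)) \<in> KR \<Gamma> U))"
proof (intro conjI allI impI)
  fix \<alpha> X
  assume h: "X \<in> Kalpha \<Gamma> U \<alpha> \<and> \<not> (\<exists>c. \<forall>p\<in>U. X 1 p = 0 \<and> X 2 p = c)"
  show "star \<Gamma> U \<alpha>" using part1[OF assms(1,2,3,4,5)] h by blast
next
  fix \<alpha> u w
  assume st: "star \<Gamma> U \<alpha>" and K: "vf u w \<in> KC \<Gamma> U"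
  show "\<forall>p\<in>U. \<alpha> * pd 2 u p + pd 2 (pd 2 u) p = 0" using part2a[OF assms(1) st K] by blast
  show "\<forall>p\<in>U. (Gc \<Gamma> 1 2 2 p + Gc \<Gamma> 2 1 2 p) * pd 1 w p + pd 1 (pd 1 w) p = 0" using part2a[OF assms(1) st K] by blast
next
  fix \<alpha> X
  assume st: "star \<Gamma> U \<alpha>"
  show "X \<in> Kalpha \<Gamma> U \<alpha> \<longleftrightarrow>
             (\<exists>v :: real \<Rightarrow> complex. smooth_on U (\<lambda>p. v (fst p)) \<and>
                (\<forall>p\<in>U. X 1 p = 0 \<and> X 2 p = exp (\<alpha> * complex_of_real (snd p)) * v (fst p)) \<and>
                (\<forall>p\<in>U. complex_of_real (\<Gamma> 1 2 2 (fst p) + \<Gamma> 2 1 2 (fst p))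
                           * vector_derivative v (at (fst p))
                         + vector_derivative (\<lambda>s. vector_derivative v (at s)) (at (fst p)) = 0))"
  proof
    assume "X \<in> Kalpha \<Gamma> U \<alpha>"
    then show "\<exists>v :: real \<Rightarrow> complex. smooth_on U (\<lambda>p. v (fst p)) \<and>
                (\<forall>p\<in>U. X 1 p = 0 \<and> X 2 p = exp (\<alpha> * complex_of_real (snd p)) * v (fst p)) \<and>
                (\<forall>p\<in>U. complex_of_real (\<Gamma> 1 2 2 (fst p) + \<Gamma> 2 1 2 (fst p))
                           * vector_derivative v (at (fst p))
                         + vector_derivative (\<lambda>s. vector_derivative v (at s)) (at (fst p)) = 0)"
      by (rule part2b_fwd[where \<Gamma>=\<Gamma>, OF assms(1,4,5)])
  next
    assume "\<exists>v :: real \<Rightarrow> complex. smooth_on U (\<lambda>p. v (fst p)) \<and>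
                (\<forall>p\<in>U. X 1 p = 0 \<and> X 2 p = exp (\<alpha> * complex_of_real (snd p)) * v (fst p)) \<and>
                (\<forall>p\<in>U. complex_of_real (\<Gamma> 1 2 2 (fst p) + \<Gamma> 2 1 2 (fst p))
                           * vector_derivative v (at (fst p))
                         + vector_derivative (\<lambda>s. vector_derivative v (at s)) (at (fst p)) = 0)"
    then obtain v :: "real \<Rightarrow> complex" where v: "smooth_on U (\<lambda>p. v (fst p))"
      "\<forall>p\<in>U. X 1 p = 0 \<and> X 2 p = exp (\<alpha> * complex_of_real (snd p)) * v (fst p)"
      "\<forall>p\<in>U. complex_of_real (\<Gamma> 1 2 2 (fst p) + \<Gamma> 2 1 2 (fst p))
                           * vector_derivative v (at (fst p))
                         + vector_derivative (\<lambda>s. vector_derivative v (at s)) (at (fst p)) = 0"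
      by blast
    show "X \<in> Kalpha \<Gamma> U \<alpha>" by (rule part2b_back[OF assms(1) st v])
  qed
next
  fix \<alpha> u W and w :: "nat \<Rightarrow> real \<Rightarrow> complex" and n
  assume st: "star \<Gamma> U \<alpha>" and a0: "\<alpha> = 0"
    and h: "vf u W \<in> KC \<Gamma> U \<and> (\<forall>p\<in>U. (\<lambda>n. w n (fst p) * complex_of_real (snd p) ^ n) sums W p)"
  have st0: "star \<Gamma> U 0" using st a0 by simp
  show "vf (\<lambda>p. 0) (\<lambda>p. w n (fst p)) \<in> Kalpha \<Gamma> U 0"
    using part2c[OF assms(1) st0] h by blast
next
  fix \<alpha>
  assume st: "star \<Gamma> U \<alpha>" and a0: "\<alpha> = 0"
  have st0: "star \<Gamma> U 0" using st a0 by simp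
  show "vf (\<lambda>p. 0) (\<lambda>p. complex_of_real (snd p)) \<in> KR \<Gamma> U" by (rule KR_y[OF assms(1) st0])
qed


end
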